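(* Let $\Psi$ be the multiset union of $\check\Phi_H^+$ and the multiset $V$ of weights of $V_{\check\rho}$, and define $\mathscr P_\Psi(\check\mu;t)\in\mathbb Z[t]$ by $$\sum_{\check\mu\in\Lambda_H}\mathscr P_\Psi(\check\mu;t)e^{\check\mu}=\prod_{\check\nu\in\Psi}\frac1{1-te^{-\check\nu}}.$$ For $\check\mu\in\Lambda_H$ put $$c_{\check\mu}(q)=\sum_{w\in W_H}(-1)^{\ell(w)}\mathscr P_\Psi(\check\rho_B-w\check\rho_B-\check\mu;q^{-1})\,q^{\langle\det,\check\mu\rangle}.$$ Then, as formal power series, $$\sum_{\check\mu\in\Lambda_H,\ \langle\det,\check\mu\rangle\ge0}c_{\check\mu}(q)e^{\check\mu}=L(\check\rho)\cdot\prod_{\check\gamma\in\check\Phi_H^+}\frac{1-e^{\check\gamma}}{1-q^{-1}e^{\check\gamma}},$$ where $L(\check\rho)=\prod_{\check\nu\in V}(1-e^{\check\nu})^{-1}$.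
   Context: $H$ is a split connected reductive group with coweight lattice $\Lambda_H$, positive coroots $\check\Phi_H^+$, Weyl group $W_H$ with length function $\ell$, and $\check\rho_B=\frac12\sum_{\check\gamma\in\check\Phi_H^+}\check\gamma$. $\check\rho$ is an antidominant coweight not in the linear span of the coroots, and $V_{\check\rho}$ is the irreducible representation of the dual group $\check H$ with lowest weight $\check\rho$; $V$ is the multiset of its weights. It is assumed that the character group of $H$ is generated by a character $\det$ with $\langle\det,\check\rho\rangle=1$; then $\langle\det,\check\nu\rangle=1$ for all $\check\nu\in V$ and $\langle\det,\check\gamma\rangle=0$ for all coroots $\check\gamma$. $q>1$ is a fixed number (the residue field cardinality). All series are formal series in $e^{\check\mu}$, $\check\mu\in\Lambda_H$, supported in the cone generated by $\check\Phi_H^+$ and $V$. *)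

theory Defs
  imports Main "HOL-Library.Multiset" "HOL-Library.FuncSet" "HOL-Computational_Algebra.Polynomial"
begin

text \<open>Lattices: the coweight lattice Lambda_H and the character lattice X^*(T) are both
  modelled as 'n => int for a finite index type 'n (dual bases), with the perfect pairing below.\<close>

definition pair :: "('n::finite \<Rightarrow> int) \<Rightarrow> ('n \<Rightarrow> int) \<Rightarrow> int" where
  "pair x lam = (\<Sum>i\<in>UNIV. x i * lam i)"

definition rrefl :: "(('n::finite \<Rightarrow> int) \<Rightarrow> ('n \<Rightarrow> int)) \<Rightarrow> ('n \<Rightarrow> int) \<Rightarrow> ('n \<Rightarrow> int) \<Rightarrow> ('n \<Rightarrow> int)" where
  "rrefl cor a x = (\<lambda>i. x i - pair x (cor a) * a i)"

definition corefl :: "(('n::finite \<Rightarrow> int) \<Rightarrow> ('n \<Rightarrow> int)) \<Rightarrow> ('n \<Rightarrow> int) \<Rightarrow> ('n \<Rightarrow> int) \<Rightarrow> ('n \<Rightarrow> int)" where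
  "corefl cor a lam = (\<lambda>i. lam i - pair a lam * cor a i)"

text \<open>Reduced root datum (X, R, Lambda, cor ` R): this is exactly the data of a split connected
  reductive group H (with a split maximal torus).\<close>
definition root_datum :: "('n::finite \<Rightarrow> int) set \<Rightarrow> (('n \<Rightarrow> int) \<Rightarrow> ('n \<Rightarrow> int)) \<Rightarrow> bool" where
  "root_datum R cor \<longleftrightarrow> finite R \<and> inj_on cor R
     \<and> (\<forall>a\<in>R. pair a (cor a) = 2)
     \<and> (\<forall>a\<in>R. \<forall>b\<in>R. rrefl cor a b \<in> R)
     \<and> (\<forall>a\<in>R. \<forall>b\<in>R. corefl cor a (cor b) \<in> cor ` R)
     \<and> (\<forall>a\<in>R. (\<lambda>i. 2 * a i) \<notin> R)"

definition positive_system :: "('n::finite \<Rightarrow> int) set \<Rightarrow> ('n \<Rightarrow> int) set \<Rightarrow> bool" where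
  "positive_system R Rp \<longleftrightarrow> (\<exists>xi :: 'n \<Rightarrow> real.
      (\<forall>a\<in>R. (\<Sum>i\<in>UNIV. real_of_int (a i) * xi i) \<noteq> 0)
      \<and> Rp = {a\<in>R. (\<Sum>i\<in>UNIV. real_of_int (a i) * xi i) > 0})"

definition simple_roots :: "('n \<Rightarrow> int) set \<Rightarrow> ('n \<Rightarrow> int) set" where
  "simple_roots Rp = {a\<in>Rp. \<not> (\<exists>b\<in>Rp. \<exists>c\<in>Rp. a = (\<lambda>i. b i + c i))}"

inductive_set weyl_group :: "('n::finite \<Rightarrow> int) set \<Rightarrow> (('n \<Rightarrow> int) \<Rightarrow> ('n \<Rightarrow> int))
    \<Rightarrow> (('n \<Rightarrow> int) \<Rightarrow> ('n \<Rightarrow> int)) set" for R cor where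
  weyl_id: "id \<in> weyl_group R cor"
| weyl_step: "w \<in> weyl_group R cor \<Longrightarrow> a \<in> R \<Longrightarrow> corefl cor a \<circ> w \<in> weyl_group R cor"

definition wlength :: "('n::finite \<Rightarrow> int) set \<Rightarrow> (('n \<Rightarrow> int) \<Rightarrow> ('n \<Rightarrow> int))
    \<Rightarrow> (('n \<Rightarrow> int) \<Rightarrow> ('n \<Rightarrow> int)) \<Rightarrow> nat" where
  "wlength Rp cor w = (LEAST n. \<exists>as. set as \<subseteq> simple_roots Rp \<and> length as = n
      \<and> foldr (\<lambda>a f. corefl cor a \<circ> f) as id = w)"

text \<open>rho_B - w rho_B, where 2 rho_B is the sum of the positive coroots.\<close>
definition rhodiff :: "('n::finite \<Rightarrow> int) set \<Rightarrow> (('n \<Rightarrow> int) \<Rightarrow> ('n \<Rightarrow> int))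
    \<Rightarrow> (('n \<Rightarrow> int) \<Rightarrow> ('n \<Rightarrow> int)) \<Rightarrow> ('n \<Rightarrow> int)" where
  "rhodiff Rp cor w = (let tr = (\<lambda>i. \<Sum>g\<in>cor ` Rp. g i) in (\<lambda>i. (tr i - w tr i) div 2))"

text \<open>Coefficient (a polynomial in t) of e^mu in the formal series
  prod_{nu in M} 1/(1 - t e^nu), for a multiset M of lattice vectors.\<close>
definition geom_poly :: "('n::finite \<Rightarrow> int) multiset \<Rightarrow> ('n \<Rightarrow> int) \<Rightarrow> int poly" where
  "geom_poly M mu = (let I = {(v, j). j < count M v} in
     (\<Sum>c\<in>{c \<in> I \<rightarrow>\<^sub>E (UNIV :: nat set). (\<lambda>k. \<Sum>x\<in>I. int (c x) * fst x k) = mu}.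
        monom 1 (\<Sum>x\<in>I. c x)))"

text \<open>Weight multiplicities of the irreducible representation of the dual group with lowest
  weight rho (Weyl character formula / Kostant multiplicity formula, lowest weight form):
  char(V) * prod_{gamma>0}(1 - e^gamma) = sum_w (-1)^l(w) e^{w rho + rho_B - w rho_B}.\<close>
definition weight_mult :: "('n::finite \<Rightarrow> int) set \<Rightarrow> (('n \<Rightarrow> int) \<Rightarrow> ('n \<Rightarrow> int))
    \<Rightarrow> ('n \<Rightarrow> int) set \<Rightarrow> ('n \<Rightarrow> int) \<Rightarrow> ('n \<Rightarrow> int) \<Rightarrow> int" where
  "weight_mult R cor Rp rho mu = (\<Sum>w\<in>weyl_group R cor. (-1) ^ wlength Rp cor w *
      poly (geom_poly (mset_set (cor ` Rp)) (\<lambda>i. mu i - w rho i - rhodiff Rp cor w i)) 1)"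

definition weights_V :: "('n::finite \<Rightarrow> int) set \<Rightarrow> (('n \<Rightarrow> int) \<Rightarrow> ('n \<Rightarrow> int))
    \<Rightarrow> ('n \<Rightarrow> int) set \<Rightarrow> ('n \<Rightarrow> int) \<Rightarrow> ('n \<Rightarrow> int) multiset" where
  "weights_V R cor Rp rho = (\<Sum>mu\<in>{mu. weight_mult R cor Rp rho mu \<noteq> 0}.
      replicate_mset (nat (weight_mult R cor Rp rho mu)) mu)"

definition Psi :: "('n::finite \<Rightarrow> int) set \<Rightarrow> (('n \<Rightarrow> int) \<Rightarrow> ('n \<Rightarrow> int))
    \<Rightarrow> ('n \<Rightarrow> int) set \<Rightarrow> ('n \<Rightarrow> int) \<Rightarrow> ('n \<Rightarrow> int) multiset" where
  "Psi R cor Rp rho = mset_set (cor ` Rp) + weights_V R cor Rp rho"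

definition P_Psi :: "('n::finite \<Rightarrow> int) set \<Rightarrow> (('n \<Rightarrow> int) \<Rightarrow> ('n \<Rightarrow> int))
    \<Rightarrow> ('n \<Rightarrow> int) set \<Rightarrow> ('n \<Rightarrow> int) \<Rightarrow> ('n \<Rightarrow> int) \<Rightarrow> int poly" where
  "P_Psi R cor Rp rho mu = geom_poly (image_mset (\<lambda>v i. - v i) (Psi R cor Rp rho)) mu"

definition c_coeff :: "('n::finite \<Rightarrow> int) set \<Rightarrow> (('n \<Rightarrow> int) \<Rightarrow> ('n \<Rightarrow> int))
    \<Rightarrow> ('n \<Rightarrow> int) set \<Rightarrow> ('n \<Rightarrow> int) \<Rightarrow> ('n \<Rightarrow> int) \<Rightarrow> real \<Rightarrow> ('n \<Rightarrow> int) \<Rightarrow> real" where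
  "c_coeff R cor Rp rho det q mu = (\<Sum>w\<in>weyl_group R cor. (-1) ^ wlength Rp cor w *
      poly (map_poly of_int (P_Psi R cor Rp rho (\<lambda>i. rhodiff Rp cor w i - mu i))) (1 / q)
      * q powi pair det mu)"

text \<open>Product of formal series (functions Lambda => real; the supports lie in a pointed cone,
  so the defining sum is finite).\<close>
definition fconv :: "(('n::finite \<Rightarrow> int) \<Rightarrow> real) \<Rightarrow> (('n \<Rightarrow> int) \<Rightarrow> real) \<Rightarrow> ('n \<Rightarrow> int) \<Rightarrow> real" where
  "fconv f g mu = (\<Sum>a\<in>{a. f a \<noteq> 0 \<and> g (\<lambda>i. mu i - a i) \<noteq> 0}. f a * g (\<lambda>i. mu i - a i))"

text \<open>Coefficient of e^mu in L(rho) * prod_{gamma>0} (1 - e^gamma)/(1 - q^{-1} e^gamma).\<close>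
definition rhs_coeff :: "('n::finite \<Rightarrow> int) set \<Rightarrow> (('n \<Rightarrow> int) \<Rightarrow> ('n \<Rightarrow> int))
    \<Rightarrow> ('n \<Rightarrow> int) set \<Rightarrow> ('n \<Rightarrow> int) \<Rightarrow> real \<Rightarrow> ('n \<Rightarrow> int) \<Rightarrow> real" where
  "rhs_coeff R cor Rp rho q mu =
     fconv (\<lambda>m. real_of_int (poly (geom_poly (weights_V R cor Rp rho) m) 1))
       (fconv (\<lambda>m. \<Sum>S\<in>{S. S \<subseteq> cor ` Rp \<and> (\<lambda>i. \<Sum>g\<in>S. g i) = m}. (-1) ^ card S)
              (\<lambda>m. poly (map_poly of_int (geom_poly (mset_set (cor ` Rp)) m)) (1 / q))) mu"

end

theory Submission
  imports Defs "HOL-Library.Function_Algebras"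
begin


lemma sum_fun_apply: "(\<Sum>a\<in>A. f a) i = (\<Sum>a\<in>A. (f a i :: 'b::comm_monoid_add))"
  by (induction A rule: infinite_finite_induct) auto

lemma minus_fun_apply[simp]: "((f::'a \<Rightarrow> 'b::minus) - g) i = f i - g i"
  by (simp add: fun_diff_def)
lemma uminus_fun_apply[simp]: "(- (f::'a \<Rightarrow> 'b::uminus)) i = - f i"
  by (simp add: fun_Compl_def)

definition sm :: "int \<Rightarrow> ('n \<Rightarrow> int) \<Rightarrow> ('n \<Rightarrow> int)" where
  "sm k v = (\<lambda>i. k * v i)"

lemma sm_apply[simp]: "sm k v i = k * v i" by (simp add: sm_def)

lemma pair_comm: "pair x y = pair y x"
  unfolding pair_def by (simp add: mult.commute)
lemma pair_add1: "pair (x + y) l = pair x l + pair y l"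
  unfolding pair_def by (simp add: distrib_right sum.distrib)
lemma pair_add2: "pair l (x + y) = pair l x + pair l y"
  unfolding pair_def by (simp add: distrib_left sum.distrib)
lemma pair_diff1: "pair (x - y) l = pair x l - pair y l"
  unfolding pair_def by (simp add: left_diff_distrib sum_subtractf)
lemma pair_diff2: "pair l (x - y) = pair l x - pair l y"
  unfolding pair_def by (simp add: right_diff_distrib sum_subtractf)
lemma pair_uminus1: "pair (- x) l = - pair x l"
  unfolding pair_def by (simp add: sum_negf)
lemma pair_uminus2: "pair l (- x) = - pair l x"
  unfolding pair_def by (simp add: sum_negf)
lemma pair_sm1: "pair (sm k x) l = k * pair x l"
  unfolding pair_def by (simp add: sum_distrib_left mult.assoc)
lemma pair_sm2: "pair l (sm k x) = k * pair l x"
  unfolding pair_def by (simp add: sum_distrib_left algebra_simps)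
lemma pair_zero1[simp]: "pair 0 l = 0" unfolding pair_def by simp
lemma pair_zero2[simp]: "pair l 0 = 0" unfolding pair_def by simp
lemma pair_sum1: "pair (\<Sum>a\<in>A. f a) l = (\<Sum>a\<in>A. pair (f a) l)"
  unfolding pair_def sum_fun_apply by (simp add: sum_distrib_right sum.swap[of _ UNIV])
lemma pair_sum2: "pair l (\<Sum>a\<in>A. f a) = (\<Sum>a\<in>A. pair l (f a))"
  unfolding pair_def sum_fun_apply by (simp add: sum_distrib_left sum.swap[of _ UNIV])

lemmas pair_simps = pair_add1 pair_add2 pair_diff1 pair_diff2 pair_uminus1 pair_uminus2
  pair_sm1 pair_sm2 pair_sum1 pair_sum2

lemma sm_add: "sm k (x + y) = sm k x + sm k y" by (auto simp: sm_def algebra_simps)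
lemma sm_add2: "sm (k + l) x = sm k x + sm l x" by (auto simp: sm_def algebra_simps)
lemma sm_diff2: "sm (k - l) x = sm k x - sm l x" by (auto simp: sm_def algebra_simps)
lemma sm_0[simp]: "sm 0 x = 0" by (auto simp: sm_def)
lemma sm_1[simp]: "sm 1 x = x" by (auto simp: sm_def)
lemma sm_sm: "sm k (sm l x) = sm (k * l) x" by (auto simp: sm_def)
lemma sm_uminus: "sm (-k) x = - sm k x" by (auto simp: sm_def)
lemma sm_zero[simp]: "sm k 0 = 0" by (auto simp: sm_def)

lemma vec_eqI: "(\<And>x. pair x l = pair x m) \<Longrightarrow> (l::'n::finite \<Rightarrow> int) = m"
proof
  fix i assume h: "\<And>x. pair x l = pair x m"
  have "pair (\<lambda>j. if j = i then 1 else 0) l = l i"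
    unfolding pair_def by (simp add: if_distrib[of "\<lambda>x. x * _"] cong: if_cong)
  moreover have "pair (\<lambda>j. if j = i then 1 else 0) m = m i"
    unfolding pair_def by (simp add: if_distrib[of "\<lambda>x. x * _"] cong: if_cong)
  ultimately show "l i = m i" using h by metis
qed

lemma rrefl_eq: "rrefl cor a x = x - sm (pair x (cor a)) a"
  by (auto simp: rrefl_def)
lemma corefl_eq: "corefl cor a l = l - sm (pair a l) (cor a)"
  by (auto simp: corefl_def)

definition BB :: "('n::finite \<Rightarrow> int) set \<Rightarrow> (('n \<Rightarrow> int) \<Rightarrow> ('n \<Rightarrow> int)) \<Rightarrow> ('n \<Rightarrow> int) \<Rightarrow> ('n \<Rightarrow> int) \<Rightarrow> int" where
  "BB R cor x y = (\<Sum>b\<in>R. pair x (cor b) * pair y (cor b))"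

lemma BB_comm: "BB R cor x y = BB R cor y x"
  unfolding BB_def by (simp add: mult.commute)
lemma BB_add1: "BB R cor (x + y) z = BB R cor x z + BB R cor y z"
  unfolding BB_def by (simp add: pair_add1 distrib_right sum.distrib)
lemma BB_diff1: "BB R cor (x - y) z = BB R cor x z - BB R cor y z"
  unfolding BB_def by (simp add: pair_diff1 left_diff_distrib sum_subtractf)
lemma BB_sm1: "BB R cor (sm k x) z = k * BB R cor x z"
  unfolding BB_def by (simp add: pair_sm1 sum_distrib_left mult.assoc)
lemma BB_uminus1: "BB R cor (- x) z = - BB R cor x z"
  unfolding BB_def by (simp add: pair_uminus1 sum_negf)
lemma BB_add2: "BB R cor z (x + y) = BB R cor z x + BB R cor z y"
  by (metis BB_comm BB_add1)
lemma BB_diff2: "BB R cor z (x - y) = BB R cor z x - BB R cor z y"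
  by (metis BB_comm BB_diff1)
lemma BB_sm2: "BB R cor z (sm k x) = k * BB R cor z x"
  by (metis BB_comm BB_sm1)
lemma BB_uminus2: "BB R cor z (- x) = - BB R cor z x"
  by (metis BB_comm BB_uminus1)
lemma BB_sum1: "BB R cor (\<Sum>a\<in>A. f a) z = (\<Sum>a\<in>A. BB R cor (f a) z)"
  unfolding BB_def pair_sum1 by (simp add: sum_distrib_right sum.swap[of _ R])
lemma BB_nonneg: "BB R cor x x \<ge> 0"
  unfolding BB_def by (auto intro: sum_nonneg)

lemma BB_CS: "(BB R cor x y)^2 \<le> BB R cor x x * BB R cor y y"
proof -
  define s where "s = BB R cor y y"
  define t where "t = BB R cor x y"
  have "0 \<le> BB R cor (sm s x - sm t y) (sm s x - sm t y)" by (rule BB_nonneg)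
  also have "\<dots> = s * s * BB R cor x x - 2 * s * t * t + t * t * s"
    by (simp add: BB_diff1 BB_diff2 BB_sm1 BB_sm2 s_def t_def BB_comm[of R cor y x] algebra_simps)
  finally have "0 \<le> s * (s * BB R cor x x - t * t)" by (simp add: algebra_simps)
  moreover have "s \<ge> 0" unfolding s_def by (rule BB_nonneg)
  ultimately have "s = 0 \<or> t * t \<le> s * BB R cor x x"
    by (auto simp: zero_le_mult_iff)
  moreover have "s = 0 \<Longrightarrow> t = 0"
  proof (cases "finite R")
    case True
    assume "s = 0"
    hence "\<forall>b\<in>R. pair y (cor b) * pair y (cor b) = 0"
      unfolding s_def BB_def using True by (subst (asm) sum_nonneg_eq_0_iff) auto
    thus "t = 0" unfolding t_def BB_def by simp
  next
    case False thus "t = 0" unfolding t_def BB_def by simp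
  qed
  ultimately show ?thesis unfolding power2_eq_square t_def s_def
    by (auto simp: mult.commute BB_nonneg)
qed



definition xv :: "('n \<Rightarrow> real) \<Rightarrow> ('n::finite \<Rightarrow> int) \<Rightarrow> real" where
  "xv xi a = (\<Sum>i\<in>UNIV. real_of_int (a i) * xi i)"

lemma xv_add: "xv xi (a + b) = xv xi a + xv xi b"
  unfolding xv_def by (simp add: distrib_right sum.distrib)
lemma xv_uminus: "xv xi (- a) = - xv xi a"
  unfolding xv_def by (simp add: sum_negf)
lemma xv_diff: "xv xi (a - b) = xv xi a - xv xi b"
  unfolding xv_def by (simp add: left_diff_distrib sum_subtractf)
lemma xv_sm: "xv xi (sm k a) = k * xv xi a"
  unfolding xv_def by (simp add: sum_distrib_left mult.assoc)
lemma xv_zero[simp]: "xv xi 0 = 0"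
  unfolding xv_def by simp
lemma xv_sum: "xv xi (\<Sum>a\<in>A. f a) = (\<Sum>a\<in>A. xv xi (f a))"
  unfolding xv_def sum_fun_apply by (simp add: sum_distrib_right sum.swap[of _ UNIV])

locale RD =
  fixes R :: "('n::finite \<Rightarrow> int) set" and cor :: "('n \<Rightarrow> int) \<Rightarrow> ('n \<Rightarrow> int)"
    and Rp :: "('n \<Rightarrow> int) set" and xi :: "'n \<Rightarrow> real"
  assumes rd: "root_datum R cor"
    and xi_nz: "\<forall>a\<in>R. xv xi a \<noteq> 0"
    and Rp_eq: "Rp = {a\<in>R. xv xi a > 0}"
begin

abbreviation "sr \<equiv> corefl cor"
abbreviation "xr \<equiv> rrefl cor"
abbreviation "B \<equiv> BB R cor"
abbreviation "PP \<equiv> cor ` Rp"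
abbreviation "Phi \<equiv> cor ` R"
abbreviation "Del \<equiv> simple_roots Rp"

lemma finR: "finite R" using rd unfolding root_datum_def by auto
lemma injcor: "inj_on cor R" using rd unfolding root_datum_def by auto
lemma two: "a \<in> R \<Longrightarrow> pair a (cor a) = 2" using rd unfolding root_datum_def by auto
lemma xr_R: "a \<in> R \<Longrightarrow> b \<in> R \<Longrightarrow> xr a b \<in> R" using rd unfolding root_datum_def by auto
lemma sr_Phi: "a \<in> R \<Longrightarrow> b \<in> R \<Longrightarrow> sr a (cor b) \<in> Phi" using rd unfolding root_datum_def by auto
lemma reduced: "a \<in> R \<Longrightarrow> (\<lambda>i. 2 * a i) \<notin> R" using rd unfolding root_datum_def by auto

lemma finPhi: "finite Phi" using finR by simp
lemma RpR: "Rp \<subseteq> R" using Rp_eq by auto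
lemma finRp: "finite Rp" using finR RpR finite_subset by auto

lemma xr_add: "xr a (x + y) = xr a x + xr a y"
  by (simp add: rrefl_def fun_eq_iff pair_simps algebra_simps)
lemma xr_uminus: "xr a (- x) = - xr a x"
  by (simp add: rrefl_def fun_eq_iff pair_simps algebra_simps)
lemma xr_diff: "xr a (x - y) = xr a x - xr a y"
  by (simp add: rrefl_def fun_eq_iff pair_simps algebra_simps)
lemma xr_sm: "xr a (sm k x) = sm k (xr a x)"
  by (simp add: rrefl_def fun_eq_iff pair_simps algebra_simps)
lemma xr_zero[simp]: "xr a 0 = 0"
  by (simp add: rrefl_def fun_eq_iff)
lemma xr_sum: "xr a (\<Sum>b\<in>A. f b) = (\<Sum>b\<in>A. xr a (f b))"
  by (simp add: rrefl_def fun_eq_iff sum_fun_apply pair_sum1 sum_distrib_right sum_subtractf)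

lemma sr_add: "sr a (x + y) = sr a x + sr a y"
  by (simp add: corefl_def fun_eq_iff pair_simps algebra_simps)
lemma sr_uminus: "sr a (- x) = - sr a x"
  by (simp add: corefl_def fun_eq_iff pair_simps algebra_simps)
lemma sr_diff: "sr a (x - y) = sr a x - sr a y"
  by (simp add: corefl_def fun_eq_iff pair_simps algebra_simps)
lemma sr_sm: "sr a (sm k x) = sm k (sr a x)"
  by (simp add: corefl_def fun_eq_iff pair_simps algebra_simps)
lemma sr_zero[simp]: "sr a 0 = 0"
  by (simp add: corefl_def fun_eq_iff)
lemma sr_sum: "sr a (\<Sum>b\<in>A. f b) = (\<Sum>b\<in>A. sr a (f b))"
  by (simp add: corefl_def fun_eq_iff sum_fun_apply pair_sum2 sum_distrib_right sum_subtractf)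

lemma pair_xr: "pair (xr a x) l = pair x (sr a l)"
  by (simp add: rrefl_eq corefl_eq pair_simps algebra_simps)

lemma xr_self: "a \<in> R \<Longrightarrow> xr a a = - a"
  by (simp add: rrefl_def fun_eq_iff two)
lemma sr_self: "a \<in> R \<Longrightarrow> sr a (cor a) = - cor a"
  by (simp add: corefl_def fun_eq_iff two)

lemma pair_xr_self: "a \<in> R \<Longrightarrow> pair (xr a x) (cor a) = - pair x (cor a)"
  by (simp add: pair_xr sr_self pair_simps)
lemma pair_sr_self: "a \<in> R \<Longrightarrow> pair a (sr a l) = - pair a l"
  by (simp add: pair_xr[symmetric] xr_self pair_simps)

lemma xr_invol: "a \<in> R \<Longrightarrow> xr a (xr a x) = x"
proof -
  assume a: "a \<in> R"
  have "pair (xr a x) (cor a) = - pair x (cor a)" using a by (rule pair_xr_self)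
  thus ?thesis by (simp add: rrefl_def[of cor a "xr a x"] fun_eq_iff) (simp add: rrefl_def)
qed

lemma sr_invol: "a \<in> R \<Longrightarrow> sr a (sr a x) = x"
proof -
  assume a: "a \<in> R"
  have "pair a (sr a x) = - pair a x" using a by (rule pair_sr_self)
  thus ?thesis by (simp add: corefl_def[of cor a "sr a x"] fun_eq_iff) (simp add: corefl_def)
qed

lemma xr_bij: "a \<in> R \<Longrightarrow> bij_betw (xr a) R R"
  apply (rule bij_betw_byWitness[where f' = "xr a"])
  using xr_invol xr_R by auto

lemma sr_bij: "a \<in> R \<Longrightarrow> bij_betw (sr a) Phi Phi"
  apply (rule bij_betw_byWitness[where f' = "sr a"])
  using sr_invol sr_Phi by auto

lemma B_inv: "a \<in> R \<Longrightarrow> B (xr a x) (xr a y) = B x y"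
proof -
  assume a: "a \<in> R"
  have "B (xr a x) (xr a y) = (\<Sum>b\<in>R. pair x (sr a (cor b)) * pair y (sr a (cor b)))"
    unfolding BB_def pair_xr ..
  also have "\<dots> = (\<Sum>g\<in>Phi. pair x (sr a g) * pair y (sr a g))"
    by (subst sum.reindex[OF injcor]) simp
  also have "\<dots> = (\<Sum>g\<in>Phi. pair x g * pair y g)"
    by (rule sum.reindex_bij_betw[OF sr_bij[OF a]])
  also have "\<dots> = B x y"
    unfolding BB_def by (subst sum.reindex[OF injcor]) simp
  finally show ?thesis .
qed

lemma K1: "a \<in> R \<Longrightarrow> pair x (cor a) * B a a = 2 * B a x"
proof -
  assume a: "a \<in> R"
  have "B x a = B (xr a x) (xr a a)" using B_inv[OF a] by simp
  also have "\<dots> = B (x - sm (pair x (cor a)) a) (- a)"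
    by (simp add: xr_self a rrefl_eq[of cor a x])
  also have "\<dots> = - B x a + pair x (cor a) * B a a"
    by (simp add: BB_diff1 BB_uminus2 BB_sm1)
  finally show ?thesis by (simp add: BB_comm[of R cor x a])
qed

lemma B_aa: "a \<in> R \<Longrightarrow> B a a \<ge> 4"
proof -
  assume a: "a \<in> R"
  have "pair a (cor a) * pair a (cor a) \<le> B a a"
    unfolding BB_def by (rule member_le_sum[OF a]) (auto simp: finR)
  thus ?thesis using two[OF a] by simp
qed

lemma drift:
  assumes c: "c \<in> R" and c': "c' \<in> R" and h1: "pair c (cor c') = 2" and h2: "pair c' (cor c) = 2"
  shows "c = c'"
proof (rule ccontr)
  assume ne: "c \<noteq> c'"
  define v where "v = c - c'"
  have v1: "pair v (cor c) = 0" using h2 two[OF c] by (simp add: v_def pair_simps)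
  have v2: "pair v (cor c') = 0" using h1 two[OF c'] by (simp add: v_def pair_simps)
  have inR: "c' + sm (2 * int m) v \<in> R" for m
  proof (induct m)
    case 0 then show ?case using c' by simp
  next
    case (Suc m)
    define x where "x = c' + sm (2 * int m) v"
    have px: "pair x (cor c') = 2" using v2 two[OF c'] by (simp add: x_def pair_simps)
    define y where "y = xr c' x"
    have y: "y = x - sm 2 c'" unfolding y_def by (simp add: rrefl_eq px)
    have yR: "y \<in> R" unfolding y_def x_def by (rule xr_R[OF c' Suc])
    have py: "pair y (cor c) = -2" using v1 h2 by (simp add: y x_def pair_simps)
    have "xr c y = y + sm 2 c" by (simp add: rrefl_eq py fun_eq_iff)
    also have "\<dots> = c' + sm (2 * int (Suc m)) v"
      by (simp add: y x_def v_def fun_eq_iff algebra_simps)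
    finally have "c' + sm (2 * int (Suc m)) v \<in> R" using xr_R[OF c yR] by simp
    thus ?case by (simp add: plus_fun_def sm_def)
  qed
  obtain i where vi: "v i \<noteq> 0" using ne unfolding v_def by (auto simp: fun_eq_iff)
  have "inj (\<lambda>m. c' + sm (2 * int m) v)"
  proof (rule injI)
    fix m m' assume "c' + sm (2 * int m) v = c' + sm (2 * int m') v"
    hence "2 * int m * v i = 2 * int m' * v i" by (auto simp: fun_eq_iff)
    thus "m = m'" using vi by simp
  qed
  moreover have "range (\<lambda>m. c' + sm (2 * int m) v) \<subseteq> R" using inR by auto
  ultimately have "finite (UNIV :: nat set)"
    using finR finite_subset finite_imageD by metis
  thus False by simp
qed

lemma cor_xr: assumes a: "a \<in> R" and b: "b \<in> R" shows "cor (xr a b) = sr a (cor b)"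
proof -
  define c where "c = xr a b"
  have cR: "c \<in> R" unfolding c_def using xr_R a b by simp
  obtain c' where c': "c' \<in> R" "sr a (cor b) = cor c'" using sr_Phi[OF a b] by auto
  have Bc: "B c c = B b b" unfolding c_def by (rule B_inv[OF a])
  have star: "pair x (cor c') * B c c = 2 * B c x" for x
  proof -
    have "pair x (cor c') = pair (xr a x) (cor b)" using c' by (simp add: pair_xr)
    hence "pair x (cor c') * B c c = 2 * B b (xr a x)" using K1[OF b, of "xr a x"] Bc by simp
    also have "B b (xr a x) = B c x" unfolding c_def
      using B_inv[OF a, of b "xr a x"] xr_invol[OF a] by simp
    finally show ?thesis .
  qed
  have Bpos: "B c c > 0" using B_aa[OF cR] by simp
  have e1: "pair c (cor c') = 2" using star[of c] Bpos by simp
  have "pair c' (cor c') * B c c = 2 * B c c'" by (rule star)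
  hence e0: "B c c' = B c c" using two[OF c'(1)] by simp
  have "pair c' (cor c) * B c c = 2 * B c c'" by (rule K1[OF cR])
  hence e2: "pair c' (cor c) = 2" using e0 Bpos by simp
  have "c = c'" by (rule drift[OF cR c'(1) e1 e2])
  thus ?thesis using c' c_def by simp
qed

lemma neg_R: "a \<in> R \<Longrightarrow> - a \<in> R"
  using xr_R[of a a] xr_self by simp

lemma cor_neg: "a \<in> R \<Longrightarrow> cor (- a) = - cor a"
  using cor_xr[of a a] xr_self sr_self by simp

lemma sr_neg: "a \<in> R \<Longrightarrow> sr (- a) = sr a"
  by (simp add: corefl_def cor_neg fun_eq_iff pair_simps)

end


context RD begin

lemma Rp_pos: "a \<in> Rp \<Longrightarrow> xv xi a > 0" using Rp_eq by auto
lemma Rp_R: "a \<in> Rp \<Longrightarrow> a \<in> R" using Rp_eq by auto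
lemma R_nz: "a \<in> R \<Longrightarrow> a \<noteq> 0" using two[of a] by auto

lemma R_split: "a \<in> R \<Longrightarrow> a \<in> Rp \<or> - a \<in> Rp"
  using xi_nz neg_R[of a] Rp_eq by (auto simp: xv_uminus)
lemma Rp_neg: "a \<in> Rp \<Longrightarrow> - a \<notin> Rp"
  using Rp_eq by (auto simp: xv_uminus)

lemma Del_sub: "Del \<subseteq> Rp" unfolding simple_roots_def by auto
lemma finDel: "finite Del" using finRp Del_sub finite_subset by auto

lemma not_simple: "a \<in> Del \<Longrightarrow> b \<in> Rp \<Longrightarrow> c \<in> Rp \<Longrightarrow> a = b + c \<Longrightarrow> False"
  unfolding simple_roots_def plus_fun_def by auto

lemma expand:
  "\<beta> \<in> Rp \<Longrightarrow> \<exists>c. (\<forall>\<delta>. 0 \<le> c \<delta>) \<and> \<beta> = (\<Sum>\<delta>\<in>Del. sm (c \<delta>) \<delta>)"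
proof (induction "card {a\<in>Rp. xv xi a < xv xi \<beta>}" arbitrary: \<beta> rule: less_induct)
  case less
  show ?case
  proof (cases "\<beta> \<in> Del")
    case True
    define c where "c = (\<lambda>\<delta>. if \<delta> = \<beta> then 1 else (0::int))"
    have "(\<Sum>\<delta>\<in>Del. sm (c \<delta>) \<delta>) = (\<Sum>\<delta>\<in>Del. if \<delta> = \<beta> then \<beta> else 0)"
      by (rule sum.cong) (auto simp: c_def)
    also have "\<dots> = \<beta>" using True finDel by simp
    finally show ?thesis by (intro exI[of _ c]) (auto simp: c_def)
  next
    case False
    then obtain b c where bc: "b \<in> Rp" "c \<in> Rp" "\<beta> = (\<lambda>i. b i + c i)"
      using less.prems unfolding simple_roots_def by auto
    hence bc': "\<beta> = b + c" by (simp add: plus_fun_def)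
    have xb: "xv xi b < xv xi \<beta>" and xc: "xv xi c < xv xi \<beta>"
      using bc' Rp_pos[OF bc(1)] Rp_pos[OF bc(2)] by (auto simp: xv_add)
    have lt: "card {a\<in>Rp. xv xi a < xv xi x} < card {a\<in>Rp. xv xi a < xv xi \<beta>}"
      if "x \<in> Rp" "xv xi x < xv xi \<beta>" for x
      apply (rule psubset_card_mono)
      using finRp that by auto
    obtain cb where cb: "\<forall>\<delta>. 0 \<le> cb \<delta>" "b = (\<Sum>\<delta>\<in>Del. sm (cb \<delta>) \<delta>)"
      using less.hyps[OF lt[OF bc(1) xb] bc(1)] by auto
    obtain cc where cc: "\<forall>\<delta>. 0 \<le> cc \<delta>" "c = (\<Sum>\<delta>\<in>Del. sm (cc \<delta>) \<delta>)"
      using less.hyps[OF lt[OF bc(2) xc] bc(2)] by auto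
    have "\<beta> = (\<Sum>\<delta>\<in>Del. sm (cb \<delta> + cc \<delta>) \<delta>)"
      unfolding bc' cb(2) cc(2) sm_add2 sum.distrib ..
    thus ?thesis using cb(1) cc(1) by (intro exI[of _ "\<lambda>\<delta>. cb \<delta> + cc \<delta>"]) auto
  qed
qed

lemma diff_not_root:
  assumes a: "\<alpha> \<in> Del" and d: "\<delta> \<in> Del" and r: "\<delta> - \<alpha> \<in> R" shows False
proof (cases "\<delta> - \<alpha> \<in> Rp")
  case True
  have "\<delta> = \<alpha> + (\<delta> - \<alpha>)" by simp
  thus False using not_simple[OF d _ True] a Del_sub by blast
next
  case False
  hence "- (\<delta> - \<alpha>) \<in> Rp" using R_split[OF r] by auto
  hence n: "\<alpha> - \<delta> \<in> Rp" by simp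
  have "\<alpha> = \<delta> + (\<alpha> - \<delta>)" by simp
  thus False using not_simple[OF a _ n] d Del_sub by blast
qed

lemma simple_neg:
  assumes a: "\<alpha> \<in> Del" and d: "\<delta> \<in> Del" and ne: "\<alpha> \<noteq> \<delta>"
  shows "pair \<delta> (cor \<alpha>) \<le> 0"
proof (rule ccontr)
  assume "\<not> pair \<delta> (cor \<alpha>) \<le> 0"
  hence kpos: "pair \<delta> (cor \<alpha>) > 0" by simp
  define k where "k = pair \<delta> (cor \<alpha>)"
  define l where "l = pair \<alpha> (cor \<delta>)"
  have aR: "\<alpha> \<in> R" and dR: "\<delta> \<in> R" using a d Del_sub Rp_R by auto
  have Baa: "B \<alpha> \<alpha> > 0" and Bdd: "B \<delta> \<delta> > 0" using B_aa[OF aR] B_aa[OF dR] by auto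
  have e1: "k * B \<alpha> \<alpha> = 2 * B \<alpha> \<delta>" unfolding k_def by (rule K1[OF aR])
  have e2: "l * B \<delta> \<delta> = 2 * B \<alpha> \<delta>" unfolding l_def using K1[OF dR, of \<alpha>] BB_comm by metis
  have "k * B \<alpha> \<alpha> > 0" using kpos Baa k_def by simp
  hence Bad: "B \<alpha> \<delta> > 0" using e1 by simp
  have "l * B \<delta> \<delta> > 0" using e2 Bad by simp
  hence lpos: "l > 0" by (rule zero_less_mult_pos2[OF _ Bdd])
  have cs: "(B \<alpha> \<delta>)^2 \<le> B \<alpha> \<alpha> * B \<delta> \<delta>" by (rule BB_CS)
  have "(k * l) * (B \<alpha> \<alpha> * B \<delta> \<delta>) = (k * B \<alpha> \<alpha>) * (l * B \<delta> \<delta>)"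
    by (simp add: mult_ac)
  also have "\<dots> = 4 * (B \<alpha> \<delta>)^2" unfolding e1 e2 by (simp add: power2_eq_square)
  also have "\<dots> \<le> 4 * (B \<alpha> \<alpha> * B \<delta> \<delta>)" using cs by simp
  finally have kl: "k * l \<le> 4" using Baa Bdd by (simp add: mult_le_cancel_right)
  show False
  proof (cases "k = 1")
    case True
    have "xr \<alpha> \<delta> = \<delta> - \<alpha>" using True by (simp add: rrefl_eq k_def)
    thus False using xr_R[OF aR dR] diff_not_root[OF a d] by simp
  next
    case k1: False
    show False
    proof (cases "l = 1")
      case True
      have "xr \<delta> \<alpha> = \<alpha> - \<delta>" using True by (simp add: rrefl_eq l_def)
      hence "\<alpha> - \<delta> \<in> R" using xr_R[OF dR aR] by simp
      hence "\<delta> - \<alpha> \<in> R" using neg_R by fastforce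
      thus False using diff_not_root[OF a d] by simp
    next
      case False
      have "k \<ge> 2" "l \<ge> 2" using k1 False kpos lpos k_def by auto
      moreover have "k * 2 \<le> k * l" "2 * l \<le> k * l" using \<open>k \<ge> 2\<close> \<open>l \<ge> 2\<close>
        by (simp_all add: mult_left_mono mult_right_mono)
      ultimately have "k = 2" "l = 2" using kl by linarith+
      hence "\<delta> = \<alpha>" using drift[OF dR aR] k_def l_def by simp
      thus False using ne by simp
    qed
  qed
qed

lemma sum_single:
  assumes "finite A" "\<alpha> \<in> A" "\<forall>\<delta>\<in>A. \<delta> \<noteq> \<alpha> \<longrightarrow> c \<delta> = 0"
  shows "(\<Sum>\<delta>\<in>A. sm (c \<delta>) \<delta>) = sm (c \<alpha>) \<alpha>"
proof -
  have "(\<Sum>\<delta>\<in>A. sm (c \<delta>) \<delta>) = (\<Sum>\<delta>\<in>A. if \<delta> = \<alpha> then sm (c \<alpha>) \<alpha> else 0)"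
    by (rule sum.cong) (use assms in auto)
  thus ?thesis using assms by simp
qed

lemma root3:
  assumes a: "\<alpha> \<in> Del" and b: "\<beta> \<in> Rp" and ne: "\<beta> \<noteq> \<alpha>"
  shows "xr \<alpha> \<beta> \<in> Rp"
proof -
  have aR: "\<alpha> \<in> R" and bR: "\<beta> \<in> R" using a b Del_sub Rp_R by auto
  obtain c where c: "\<forall>\<delta>. 0 \<le> c \<delta>" "\<beta> = (\<Sum>\<delta>\<in>Del. sm (c \<delta>) \<delta>)" using expand[OF b] by auto
  have "\<exists>\<delta>0\<in>Del. \<delta>0 \<noteq> \<alpha> \<and> c \<delta>0 > 0"
  proof (rule ccontr)
    assume "\<not> ?thesis"
    hence z: "\<forall>\<delta>\<in>Del. \<delta> \<noteq> \<alpha> \<longrightarrow> c \<delta> = 0" using c(1) by (metis le_less)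
    hence bk: "\<beta> = sm (c \<alpha>) \<alpha>" using c(2) sum_single[OF finDel a z] by simp
    define k where "k = c \<alpha>"
    have k0: "k \<noteq> 0" using bk R_nz[OF bR] k_def by auto
    have k1: "k \<noteq> 1" using bk ne k_def by auto
    have "pair \<alpha> (cor \<beta>) * B \<beta> \<beta> = 2 * B \<beta> \<alpha>" by (rule K1[OF bR])
    hence "pair \<alpha> (cor \<beta>) * (k * (k * B \<alpha> \<alpha>)) = 2 * (k * B \<alpha> \<alpha>)"
      using bk k_def by (simp add: BB_sm1 BB_sm2)
    hence "pair \<alpha> (cor \<beta>) * k = 2" using k0 B_aa[OF aR] by (simp add: algebra_simps)
    hence "k dvd 2" by (metis dvd_triv_right)
    moreover have "k \<ge> 0" using c(1) k_def by simp
    ultimately have "k \<le> 2" "k \<ge> 0" using zdvd_imp_le[of k 2] k0 by auto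
    hence "k = 2" using k0 k1 by linarith
    hence "\<beta> = (\<lambda>i. 2 * \<alpha> i)" using bk k_def by (simp add: sm_def)
    thus False using reduced[OF aR] bR by simp
  qed
  then obtain \<delta>0 where d0: "\<delta>0 \<in> Del" "\<delta>0 \<noteq> \<alpha>" "c \<delta>0 > 0" by auto
  define m where "m = pair \<beta> (cor \<alpha>)"
  have gR: "xr \<alpha> \<beta> \<in> R" using xr_R[OF aR bR] .
  show ?thesis
  proof (rule ccontr)
    assume "xr \<alpha> \<beta> \<notin> Rp"
    hence "- xr \<alpha> \<beta> \<in> Rp" using R_split[OF gR] by auto
    then obtain d where d: "\<forall>\<delta>. 0 \<le> d \<delta>" "- xr \<alpha> \<beta> = (\<Sum>\<delta>\<in>Del. sm (d \<delta>) \<delta>)"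
      using expand by blast
    define e where "e = (\<lambda>\<delta>. c \<delta> + d \<delta>)"
    have h: "\<beta> + (- xr \<alpha> \<beta>) = sm m \<alpha>" by (simp add: rrefl_eq m_def)
    have eq: "(\<Sum>\<delta>\<in>Del. sm (e \<delta>) \<delta>) = sm m \<alpha>"
      unfolding e_def sm_add2 sum.distrib c(2)[symmetric] d(2)[symmetric] by (rule h)
    have e0: "\<forall>\<delta>. 0 \<le> e \<delta>" using c(1) d(1) e_def by (simp add: add_nonneg_nonneg)
    have "xv xi (\<Sum>\<delta>\<in>Del. sm (e \<delta>) \<delta>) = (\<Sum>\<delta>\<in>Del. e \<delta> * xv xi \<delta>)"
      by (simp add: xv_sum xv_sm)
    also have "\<dots> = e \<alpha> * xv xi \<alpha> + (\<Sum>\<delta>\<in>Del - {\<alpha>}. e \<delta> * xv xi \<delta>)"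
      using finDel a by (simp add: sum.remove)
    finally have x1: "m * xv xi \<alpha> = e \<alpha> * xv xi \<alpha> + (\<Sum>\<delta>\<in>Del - {\<alpha>}. e \<delta> * xv xi \<delta>)"
      using eq by (simp add: xv_sm)
    have nn: "\<forall>\<delta>\<in>Del - {\<alpha>}. 0 \<le> e \<delta> * xv xi \<delta>"
    proof
      fix \<delta> assume "\<delta> \<in> Del - {\<alpha>}"
      hence "xv xi \<delta> > 0" using Del_sub Rp_pos by auto
      thus "0 \<le> e \<delta> * xv xi \<delta>" using e0 by simp
    qed
    have "xv xi \<delta>0 > 0" using d0 Del_sub Rp_pos[of \<delta>0] by auto
    moreover have "e \<delta>0 > 0" using d0 d(1)[rule_format, of \<delta>0] e_def by simp
    ultimately have pp: "0 < e \<delta>0 * xv xi \<delta>0" by simp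
    have "(\<Sum>\<delta>\<in>Del - {\<alpha>}. e \<delta> * xv xi \<delta>) > 0"
      by (rule sum_pos2[of _ \<delta>0]) (use finDel d0 nn pp in auto)
    hence "(m - e \<alpha>) * xv xi \<alpha> > 0" using x1 by (simp add: algebra_simps)
    moreover have "xv xi \<alpha> > 0" using Rp_pos[of \<alpha>] a Del_sub by auto
    ultimately have mpos: "m - e \<alpha> > 0" using zero_less_mult_pos2 by fastforce
    have "pair (\<Sum>\<delta>\<in>Del. sm (e \<delta>) \<delta>) (cor \<alpha>) = (\<Sum>\<delta>\<in>Del. e \<delta> * pair \<delta> (cor \<alpha>))"
      by (simp add: pair_sum1 pair_sm1)
    also have "\<dots> = e \<alpha> * 2 + (\<Sum>\<delta>\<in>Del - {\<alpha>}. e \<delta> * pair \<delta> (cor \<alpha>))"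
      using finDel a two[OF aR] by (simp add: sum.remove)
    finally have x2: "2 * m = e \<alpha> * 2 + (\<Sum>\<delta>\<in>Del - {\<alpha>}. e \<delta> * pair \<delta> (cor \<alpha>))"
      using eq two[OF aR] by (simp add: pair_sm1)
    have "(\<Sum>\<delta>\<in>Del - {\<alpha>}. e \<delta> * pair \<delta> (cor \<alpha>)) \<le> 0"
      apply (rule sum_nonpos)
      using simple_neg[OF a] e0 by (auto intro: mult_nonneg_nonpos)
    thus False using x2 mpos by simp
  qed
qed

end


lemma sm_cancel: "(a::'n \<Rightarrow> int) \<noteq> 0 \<Longrightarrow> sm k a = sm l a \<Longrightarrow> k = l"
proof -
  assume "a \<noteq> 0" "sm k a = sm l a"
  then obtain i where "a i \<noteq> 0" "k * a i = l * a i" by (auto simp: fun_eq_iff)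
  thus "k = l" by simp
qed

context RD begin

definition rr where "rr = (\<Sum>a\<in>Rp. a)"
definition tt where "tt = (\<Sum>g\<in>PP. g)"

lemma Del_R: "\<alpha> \<in> Del \<Longrightarrow> \<alpha> \<in> R" using Del_sub Rp_R by auto
lemma Del_Rp: "\<alpha> \<in> Del \<Longrightarrow> \<alpha> \<in> Rp" using Del_sub by auto

lemma cor_root3: "\<alpha> \<in> Del \<Longrightarrow> \<beta> \<in> Rp \<Longrightarrow> \<beta> \<noteq> \<alpha> \<Longrightarrow> sr \<alpha> (cor \<beta>) \<in> PP"
proof -
  assume h: "\<alpha> \<in> Del" "\<beta> \<in> Rp" "\<beta> \<noteq> \<alpha>"
  have "cor (xr \<alpha> \<beta>) \<in> PP" using root3[OF h] by simp
  thus ?thesis using cor_xr[of \<alpha> \<beta>] Del_R Rp_R h by simp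
qed

lemma PP_Phi: "PP \<subseteq> Phi" using RpR by auto
lemma finPP: "finite PP" using finRp by simp

lemma PP_neg: "\<gamma> \<in> PP \<Longrightarrow> - \<gamma> \<notin> PP"
proof
  assume "\<gamma> \<in> PP" "- \<gamma> \<in> PP"
  then obtain a b where ab: "a \<in> Rp" "b \<in> Rp" "\<gamma> = cor a" "- \<gamma> = cor b" by auto
  hence "cor b = cor (- a)" using cor_neg Rp_R by simp
  hence "b = - a" using injcor ab Rp_R neg_R by (meson inj_onD)
  thus False using Rp_neg ab by simp
qed

lemma Phi_split: "\<gamma> \<in> Phi \<Longrightarrow> \<gamma> \<in> PP \<or> - \<gamma> \<in> PP"
proof -
  assume "\<gamma> \<in> Phi"
  then obtain a where a: "a \<in> R" "\<gamma> = cor a" by auto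
  show ?thesis using R_split[OF a(1)] cor_neg[OF a(1)] a by force
qed

lemma Phi_neg: "\<gamma> \<in> Phi \<Longrightarrow> - \<gamma> \<in> Phi"
  using cor_neg neg_R by force

lemma neg_cor_notPP: "\<alpha> \<in> Rp \<Longrightarrow> - cor \<alpha> \<notin> PP"
  using PP_neg by auto

lemma sr_PP: "\<alpha> \<in> Del \<Longrightarrow> bij_betw (sr \<alpha>) (PP - {cor \<alpha>}) (PP - {cor \<alpha>})"
proof -
  assume a: "\<alpha> \<in> Del"
  have into: "sr \<alpha> \<gamma> \<in> PP - {cor \<alpha>}" if g: "\<gamma> \<in> PP - {cor \<alpha>}" for \<gamma>
  proof -
    obtain b where b: "b \<in> Rp" "\<gamma> = cor b" using g by auto
    have "b \<noteq> \<alpha>" using g b by auto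
    hence "sr \<alpha> \<gamma> \<in> PP" using cor_root3[OF a b(1)] b by simp
    moreover have "sr \<alpha> \<gamma> \<noteq> cor \<alpha>"
    proof
      assume "sr \<alpha> \<gamma> = cor \<alpha>"
      hence "\<gamma> = sr \<alpha> (cor \<alpha>)" using sr_invol[OF Del_R[OF a]] by metis
      hence "\<gamma> = - cor \<alpha>" using sr_self[OF Del_R[OF a]] by simp
      thus False using g neg_cor_notPP[OF Del_Rp[OF a]] by simp
    qed
    ultimately show ?thesis by simp
  qed
  show ?thesis
    by (rule bij_betw_byWitness[where f' = "sr \<alpha>"]) (use into sr_invol[OF Del_R[OF a]] in auto)
qed

lemma xr_Rp: "\<alpha> \<in> Del \<Longrightarrow> bij_betw (xr \<alpha>) (Rp - {\<alpha>}) (Rp - {\<alpha>})"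
proof -
  assume a: "\<alpha> \<in> Del"
  have into: "xr \<alpha> b \<in> Rp - {\<alpha>}" if g: "b \<in> Rp - {\<alpha>}" for b
  proof -
    have "xr \<alpha> b \<in> Rp" using root3[OF a] g by auto
    moreover have "xr \<alpha> b \<noteq> \<alpha>"
    proof
      assume "xr \<alpha> b = \<alpha>"
      hence "b = xr \<alpha> \<alpha>" using xr_invol[OF Del_R[OF a]] by metis
      hence "b = - \<alpha>" using xr_self[OF Del_R[OF a]] by simp
      thus False using g Rp_neg[OF Del_Rp[OF a]] by simp
    qed
    ultimately show ?thesis by simp
  qed
  show ?thesis
    by (rule bij_betw_byWitness[where f' = "xr \<alpha>"]) (use into xr_invol[OF Del_R[OF a]] in auto)
qed

lemma pair_rr_simple: "\<alpha> \<in> Del \<Longrightarrow> pair rr (cor \<alpha>) = 2"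
proof -
  assume a: "\<alpha> \<in> Del"
  have aR: "\<alpha> \<in> R" using Del_R[OF a] .
  have s1: "rr = \<alpha> + (\<Sum>b\<in>Rp - {\<alpha>}. b)" unfolding rr_def
    using finRp Del_Rp[OF a] by (simp add: sum.remove)
  have "xr \<alpha> rr = xr \<alpha> \<alpha> + (\<Sum>b\<in>Rp - {\<alpha>}. xr \<alpha> b)" unfolding rr_def xr_sum
    using finRp Del_Rp[OF a] by (simp add: sum.remove)
  also have "(\<Sum>b\<in>Rp - {\<alpha>}. xr \<alpha> b) = (\<Sum>b\<in>Rp - {\<alpha>}. b)"
    by (rule sum.reindex_bij_betw[OF xr_Rp[OF a]])
  finally have s2: "xr \<alpha> rr = - \<alpha> + (\<Sum>b\<in>Rp - {\<alpha>}. b)" using xr_self[OF aR] by (simp add: fun_eq_iff)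
  have "rr - sm 2 \<alpha> = - \<alpha> + (\<Sum>b\<in>Rp - {\<alpha>}. b)"
    by (subst s1) (simp add: fun_eq_iff)
  hence "xr \<alpha> rr = rr - sm 2 \<alpha>" using s2 by simp
  moreover have "xr \<alpha> rr = rr - sm (pair rr (cor \<alpha>)) \<alpha>" by (rule rrefl_eq)
  ultimately have "sm (pair rr (cor \<alpha>)) \<alpha> = sm 2 \<alpha>" by simp
  thus ?thesis using sm_cancel R_nz[OF aR] by blast
qed

lemma sr_tt: "\<alpha> \<in> Del \<Longrightarrow> sr \<alpha> tt = tt - sm 2 (cor \<alpha>)"
proof -
  assume a: "\<alpha> \<in> Del"
  have aR: "\<alpha> \<in> R" using Del_R[OF a] .
  have c: "cor \<alpha> \<in> PP" using Del_Rp[OF a] by simp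
  have s1: "tt = cor \<alpha> + (\<Sum>b\<in>PP - {cor \<alpha>}. b)" unfolding tt_def
    using finPP c by (simp add: sum.remove)
  have "sr \<alpha> tt = sr \<alpha> (cor \<alpha>) + (\<Sum>b\<in>PP - {cor \<alpha>}. sr \<alpha> b)" unfolding tt_def sr_sum
    using finPP c by (simp add: sum.remove)
  also have "(\<Sum>b\<in>PP - {cor \<alpha>}. sr \<alpha> b) = (\<Sum>b\<in>PP - {cor \<alpha>}. b)"
    by (rule sum.reindex_bij_betw[OF sr_PP[OF a]])
  finally have s2: "sr \<alpha> tt = - cor \<alpha> + (\<Sum>b\<in>PP - {cor \<alpha>}. b)" using sr_self[OF aR] by (simp add: fun_eq_iff)
  have "tt - sm 2 (cor \<alpha>) = - cor \<alpha> + (\<Sum>b\<in>PP - {cor \<alpha>}. b)"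
    by (subst s1) (simp add: fun_eq_iff)
  thus "sr \<alpha> tt = tt - sm 2 (cor \<alpha>)" using s2 by simp
qed

lemma pair_tt_simple: "\<alpha> \<in> Del \<Longrightarrow> pair \<alpha> tt = 2"
proof -
  assume a: "\<alpha> \<in> Del"
  have "sr \<alpha> tt = tt - sm (pair \<alpha> tt) (cor \<alpha>)" by (rule corefl_eq)
  hence "sm (pair \<alpha> tt) (cor \<alpha>) = sm 2 (cor \<alpha>)" using sr_tt[OF a] by simp
  moreover have "cor \<alpha> \<noteq> 0" using two[OF Del_R[OF a]] by auto
  ultimately show ?thesis using sm_cancel by blast
qed

lemma rr_pos: "\<beta> \<in> Rp \<Longrightarrow> pair rr (cor \<beta>) > 0"
proof -
  assume b: "\<beta> \<in> Rp"
  have bR: "\<beta> \<in> R" using Rp_R[OF b] .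
  obtain c where c: "\<forall>\<delta>. 0 \<le> c \<delta>" "\<beta> = (\<Sum>\<delta>\<in>Del. sm (c \<delta>) \<delta>)" using expand[OF b] by auto
  have Bd: "B \<delta> rr = B \<delta> \<delta>" if d: "\<delta> \<in> Del" for \<delta>
    using K1[OF Del_R[OF d], of rr] pair_rr_simple[OF d] by simp
  have "\<exists>\<delta>0\<in>Del. c \<delta>0 > 0"
  proof (rule ccontr)
    assume "\<not> ?thesis"
    hence "\<forall>\<delta>\<in>Del. c \<delta> = 0" using c(1) by (metis le_less)
    hence "\<beta> = 0" using c(2) by simp
    thus False using R_nz[OF bR] by simp
  qed
  then obtain \<delta>0 where d0: "\<delta>0 \<in> Del" "c \<delta>0 > 0" by auto
  have "B \<beta> rr = (\<Sum>\<delta>\<in>Del. c \<delta> * B \<delta> \<delta>)"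
    apply (subst c(2)) unfolding BB_sum1 BB_sm1 using Bd by simp
  also have "\<dots> > 0"
  proof (rule sum_pos2[OF finDel d0(1)])
    show "0 < c \<delta>0 * B \<delta>0 \<delta>0" using d0 B_aa[OF Del_R[OF d0(1)]] by simp
    show "\<And>i. i \<in> Del \<Longrightarrow> 0 \<le> c i * B i i" using c(1) by (simp add: BB_nonneg)
  qed
  finally have "B \<beta> rr > 0" .
  moreover have "pair rr (cor \<beta>) * B \<beta> \<beta> = 2 * B \<beta> rr" by (rule K1[OF bR])
  ultimately show ?thesis using B_aa[OF bR] by (metis zero_less_mult_iff zero_less_numeral less_le_not_le order.trans zero_le_numeral)
qed

lemma PP_pos: "\<gamma> \<in> PP \<Longrightarrow> pair rr \<gamma> > 0"
  using rr_pos by auto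

lemma sumPP0: "S \<subseteq> PP \<Longrightarrow> (\<Sum>g\<in>S. g) = 0 \<Longrightarrow> S = {}"
proof (rule ccontr)
  assume S: "S \<subseteq> PP" "(\<Sum>g\<in>S. g) = 0" "S \<noteq> {}"
  have fS: "finite S" using S finPP finite_subset by auto
  have "pair rr (\<Sum>g\<in>S. g) = (\<Sum>g\<in>S. pair rr g)" by (rule pair_sum2)
  also have "\<dots> > 0" using fS S PP_pos by (intro sum_pos) auto
  finally show False using S by simp
qed

lemma pair_Rp_nonpos: "\<forall>\<alpha>\<in>Del. pair \<alpha> \<mu> \<le> 0 \<Longrightarrow> \<beta> \<in> Rp \<Longrightarrow> pair \<beta> \<mu> \<le> 0"
proof -
  assume h: "\<forall>\<alpha>\<in>Del. pair \<alpha> \<mu> \<le> 0" and b: "\<beta> \<in> Rp"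
  obtain c where c: "\<forall>\<delta>. 0 \<le> c \<delta>" "\<beta> = (\<Sum>\<delta>\<in>Del. sm (c \<delta>) \<delta>)" using expand[OF b] by auto
  have "pair \<beta> \<mu> = (\<Sum>\<delta>\<in>Del. c \<delta> * pair \<delta> \<mu>)"
    by (subst c(2)) (simp add: pair_sum1 pair_sm1)
  also have "\<dots> \<le> 0" using h c(1) by (intro sum_nonpos) (simp add: mult_nonneg_nonpos)
  finally show ?thesis .
qed

end


context RD begin

definition wd :: "('n \<Rightarrow> int) list \<Rightarrow> ('n \<Rightarrow> int) \<Rightarrow> ('n \<Rightarrow> int)" where
  "wd as = foldr (\<lambda>a f. sr a \<circ> f) as id"
definition wdX :: "('n \<Rightarrow> int) list \<Rightarrow> ('n \<Rightarrow> int) \<Rightarrow> ('n \<Rightarrow> int)" where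
  "wdX as = foldr (\<lambda>a f. xr a \<circ> f) as id"

lemma wd_Nil[simp]: "wd [] = id" by (simp add: wd_def)
lemma wd_Cons[simp]: "wd (a # as) = sr a \<circ> wd as" by (simp add: wd_def)
lemma wd_append: "wd (as @ bs) = wd as \<circ> wd bs" by (induction as) auto
lemma wdX_Nil[simp]: "wdX [] = id" by (simp add: wdX_def)
lemma wdX_Cons[simp]: "wdX (a # as) = xr a \<circ> wdX as" by (simp add: wdX_def)

lemma wd_add: "wd as (x + y) = wd as x + wd as y"
proof (induction as)
  case (Cons a as) then show ?case by (simp only: wd_Cons o_apply Cons.IH sr_add)
qed simp
lemma wd_uminus: "wd as (- x) = - wd as x"
proof (induction as)
  case (Cons a as) then show ?case by (simp only: wd_Cons o_apply Cons.IH sr_uminus)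
qed simp
lemma wd_diff: "wd as (x - y) = wd as x - wd as y"
proof (induction as)
  case (Cons a as) then show ?case by (simp only: wd_Cons o_apply Cons.IH sr_diff)
qed simp
lemma wd_sm: "wd as (sm k x) = sm k (wd as x)"
proof (induction as)
  case (Cons a as) then show ?case by (simp only: wd_Cons o_apply Cons.IH sr_sm)
qed simp
lemma wd_zero[simp]: "wd as 0 = 0"
proof (induction as)
  case (Cons a as) then show ?case by (simp only: wd_Cons o_apply Cons.IH sr_zero)
qed simp
lemma wd_sum: "wd as (\<Sum>b\<in>A. f b) = (\<Sum>b\<in>A. wd as (f b))"
proof (induction as)
  case (Cons a as) then show ?case by (simp only: wd_Cons o_apply Cons.IH sr_sum)
qed simp

lemma wd_rev1: "set as \<subseteq> R \<Longrightarrow> wd (rev as) (wd as x) = x"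
  by (induction as arbitrary: x) (auto simp: wd_append sr_invol)
lemma wd_rev2: "set as \<subseteq> R \<Longrightarrow> wd as (wd (rev as) x) = x"
  using wd_rev1[of "rev as"] by simp

lemma pair_wdX: "pair (wdX as x) l = pair x (wd (rev as) l)"
  by (induction as arbitrary: x l) (auto simp: pair_xr wd_append)

lemma wdX_R: "set as \<subseteq> R \<Longrightarrow> b \<in> R \<Longrightarrow> wdX as b \<in> R"
  by (induction as) (auto simp: xr_R)

lemma cor_wdX: "set as \<subseteq> R \<Longrightarrow> b \<in> R \<Longrightarrow> cor (wdX as b) = wd as (cor b)"
  by (induction as) (auto simp: cor_xr wdX_R)

lemma wd_Phi: "set as \<subseteq> R \<Longrightarrow> \<gamma> \<in> Phi \<Longrightarrow> wd as \<gamma> \<in> Phi"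
  using cor_wdX wdX_R by force

lemma wd_Phi_bij: "set as \<subseteq> R \<Longrightarrow> bij_betw (wd as) Phi Phi"
  apply (rule bij_betw_byWitness[where f' = "wd (rev as)"])
  using wd_rev1 wd_rev2 wd_Phi[of as] wd_Phi[of "rev as"] by auto

lemma wd_inj: "set as \<subseteq> R \<Longrightarrow> inj (wd as)"
  by (metis injI wd_rev1)

lemma conj: assumes as: "set as \<subseteq> R" and b: "b \<in> R"
  shows "sr (wdX as b) = wd as \<circ> sr b \<circ> wd (rev as)"
proof
  fix l
  have "sr (wdX as b) l = l - sm (pair b (wd (rev as) l)) (wd as (cor b))"
    by (simp add: corefl_eq pair_wdX cor_wdX[OF as b])
  also have "\<dots> = wd as (sr b (wd (rev as) l))"
    by (simp add: corefl_eq wd_diff wd_sm wd_rev2[OF as])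
  finally show "sr (wdX as b) l = (wd as \<circ> sr b \<circ> wd (rev as)) l" by simp
qed

lemma weyl_word: "w \<in> weyl_group R cor \<Longrightarrow> \<exists>as. set as \<subseteq> R \<and> w = wd as"
proof (induction rule: weyl_group.induct)
  case weyl_id then show ?case by (intro exI[of _ "[]"]) simp
next
  case (weyl_step w a)
  then obtain as where "set as \<subseteq> R" "w = wd as" by auto
  thus ?case using weyl_step by (intro exI[of _ "a # as"]) auto
qed

lemma word_weyl: "set as \<subseteq> R \<Longrightarrow> wd as \<in> weyl_group R cor"
  by (induction as) (auto intro: weyl_group.intros)

lemma Rp_conj: "\<beta> \<in> Rp \<Longrightarrow> \<exists>as \<gamma>. set as \<subseteq> Del \<and> \<gamma> \<in> Del \<and> \<beta> = wdX as \<gamma>"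
proof (induction "card {a\<in>Rp. xv xi a < xv xi \<beta>}" arbitrary: \<beta> rule: less_induct)
  case less
  show ?case
  proof (cases "\<beta> \<in> Del")
    case True thus ?thesis by (intro exI[of _ "[]"] exI[of _ \<beta>]) auto
  next
    case False
    have bR: "\<beta> \<in> R" using Rp_R[OF less.prems] .
    obtain c where c: "\<forall>\<delta>. 0 \<le> c \<delta>" "\<beta> = (\<Sum>\<delta>\<in>Del. sm (c \<delta>) \<delta>)"
      using expand[OF less.prems] by auto
    have "\<exists>\<delta>\<in>Del. pair \<beta> (cor \<delta>) > 0"
    proof (rule ccontr)
      assume "\<not> ?thesis"
      hence h: "\<forall>\<delta>\<in>Del. pair \<beta> (cor \<delta>) \<le> 0" by auto
      have "B \<beta> \<beta> = (\<Sum>\<delta>\<in>Del. c \<delta> * B \<delta> \<beta>)"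
        by (subst (1) c(2)) (simp add: BB_sum1 BB_sm1)
      also have "\<dots> \<le> 0"
      proof (rule sum_nonpos)
        fix \<delta> assume d: "\<delta> \<in> Del"
        have "pair \<beta> (cor \<delta>) * B \<delta> \<delta> = 2 * B \<delta> \<beta>" by (rule K1[OF Del_R[OF d]])
        moreover have "pair \<beta> (cor \<delta>) * B \<delta> \<delta> \<le> 0"
          using h d B_aa[OF Del_R[OF d]] by (simp add: mult_nonpos_nonneg)
        ultimately have "B \<delta> \<beta> \<le> 0" by simp
        thus "c \<delta> * B \<delta> \<beta> \<le> 0" using c(1) by (simp add: mult_nonneg_nonpos)
      qed
      finally show False using B_aa[OF bR] by simp
    qed
    then obtain \<delta> where d: "\<delta> \<in> Del" "pair \<beta> (cor \<delta>) > 0" by auto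
    have ne: "\<beta> \<noteq> \<delta>" using False d by auto
    define \<beta>' where "\<beta>' = xr \<delta> \<beta>"
    have b'Rp: "\<beta>' \<in> Rp" unfolding \<beta>'_def by (rule root3[OF d(1) less.prems ne])
    have "xv xi \<beta>' = xv xi \<beta> - pair \<beta> (cor \<delta>) * xv xi \<delta>"
      unfolding \<beta>'_def by (simp add: rrefl_eq xv_diff xv_sm)
    moreover have "xv xi \<delta> > 0" using Rp_pos Del_Rp d by auto
    ultimately have lt: "xv xi \<beta>' < xv xi \<beta>" using d(2) by simp
    have "card {a\<in>Rp. xv xi a < xv xi \<beta>'} < card {a\<in>Rp. xv xi a < xv xi \<beta>}"
      apply (rule psubset_card_mono) using finRp b'Rp lt by auto
    then obtain as \<gamma> where ih: "set as \<subseteq> Del" "\<gamma> \<in> Del" "\<beta>' = wdX as \<gamma>"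
      using less.hyps b'Rp by blast
    have "\<beta> = xr \<delta> \<beta>'" unfolding \<beta>'_def using xr_invol[OF Del_R[OF d(1)]] by simp
    hence "\<beta> = wdX (\<delta> # as) \<gamma>" using ih by simp
    thus ?thesis using ih d by (intro exI[of _ "\<delta> # as"] exI[of _ \<gamma>]) auto
  qed
qed

lemma Del_sub_R: "set as \<subseteq> Del \<Longrightarrow> set as \<subseteq> R" using Del_R by auto

lemma sr_word: "a \<in> R \<Longrightarrow> \<exists>ws. set ws \<subseteq> Del \<and> sr a = wd ws"
proof -
  have pos: "\<exists>ws. set ws \<subseteq> Del \<and> sr a = wd ws" if a: "a \<in> Rp" for a
  proof -
    obtain as \<gamma> where h: "set as \<subseteq> Del" "\<gamma> \<in> Del" "a = wdX as \<gamma>" using Rp_conj[OF a] by auto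
    have "sr a = wd as \<circ> sr \<gamma> \<circ> wd (rev as)"
      using conj[OF Del_sub_R[OF h(1)] Del_R[OF h(2)]] h(3) by simp
    also have "\<dots> = wd (as @ [\<gamma>] @ rev as)" by (simp add: wd_append o_assoc)
    finally show ?thesis using h by (intro exI[of _ "as @ [\<gamma>] @ rev as"]) auto
  qed
  assume a: "a \<in> R"
  show ?thesis
  proof (cases "a \<in> Rp")
    case True thus ?thesis by (rule pos)
  next
    case False
    hence n: "- a \<in> Rp" using R_split[OF a] by auto
    have "sr a = sr (- a)" using sr_neg[OF neg_R[OF a]] by simp
    thus ?thesis using pos[OF n] by simp
  qed
qed

lemma weyl_Del_word: "w \<in> weyl_group R cor \<Longrightarrow> \<exists>ws. set ws \<subseteq> Del \<and> w = wd ws"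
proof (induction rule: weyl_group.induct)
  case weyl_id then show ?case by (intro exI[of _ "[]"]) simp
next
  case (weyl_step w a)
  then obtain ws where ws: "set ws \<subseteq> Del" "w = wd ws" by auto
  obtain vs where vs: "set vs \<subseteq> Del" "sr a = wd vs" using sr_word[OF weyl_step(2)] by auto
  show ?case using ws vs by (intro exI[of _ "vs @ ws"]) (auto simp: wd_append)
qed

end


lemma card_filter_sum: "finite A \<Longrightarrow> card {x\<in>A. Q x} = (\<Sum>x\<in>A. if Q x then 1 else 0)"
  by (simp add: sum.If_cases Int_def)

lemma card_split: "finite A \<Longrightarrow> c \<in> A \<Longrightarrow>
   card {x\<in>A. Q x} = card {x\<in>A - {c}. Q x} + (if Q c then 1 else 0)"
  by (simp add: card_filter_sum sum.remove)

context RD begin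

definition nn where "nn w = card {\<gamma>\<in>PP. w \<gamma> \<notin> PP}"
definition NN where "NN w = {\<gamma>\<in>PP. \<gamma> \<notin> w ` PP}"

lemma wd_snoc: "wd (as @ [a]) = wd as \<circ> sr a" by (simp add: wd_append)

lemma nn_step:
  assumes as: "set as \<subseteq> R" and a: "\<alpha> \<in> Del"
  shows "nn (wd as \<circ> sr \<alpha>) = (if wd as (cor \<alpha>) \<in> PP then nn (wd as) + 1 else nn (wd as) - 1)
     \<and> (wd as (cor \<alpha>) \<notin> PP \<longrightarrow> nn (wd as) \<ge> 1)"
proof -
  define w where "w = wd as"
  have cP: "cor \<alpha> \<in> PP" using Del_Rp[OF a] by simp
  define C where "C = card {\<delta>\<in>PP - {cor \<alpha>}. w \<delta> \<notin> PP}"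
  have h1: "nn w = C + (if w (cor \<alpha>) \<notin> PP then 1 else 0)"
    unfolding nn_def C_def by (rule card_split[OF finPP cP])
  have h2: "nn (w \<circ> sr \<alpha>) = card {\<gamma>\<in>PP - {cor \<alpha>}. w (sr \<alpha> \<gamma>) \<notin> PP}
       + (if w (sr \<alpha> (cor \<alpha>)) \<notin> PP then 1 else 0)"
    unfolding nn_def comp_def by (rule card_split[OF finPP cP])
  have r: "(\<Sum>\<gamma>\<in>PP - {cor \<alpha>}. (\<lambda>\<delta>. if w \<delta> \<notin> PP then 1 else (0::nat)) (sr \<alpha> \<gamma>))
      = (\<Sum>\<delta>\<in>PP - {cor \<alpha>}. if w \<delta> \<notin> PP then 1 else 0)"
    by (rule sum.reindex_bij_betw[OF sr_PP[OF a]])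
  have h3: "card {\<gamma>\<in>PP - {cor \<alpha>}. w (sr \<alpha> \<gamma>) \<notin> PP} = C"
    unfolding C_def card_filter_sum[OF finite_Diff[OF finPP]] using r by simp
  have h4: "w (sr \<alpha> (cor \<alpha>)) = - w (cor \<alpha>)"
    unfolding w_def using sr_self[OF Del_R[OF a]] wd_uminus by simp
  have wc: "w (cor \<alpha>) \<in> Phi" unfolding w_def using wd_Phi[OF as] cP PP_Phi by blast
  show ?thesis
  proof (cases "w (cor \<alpha>) \<in> PP")
    case True
    hence n: "- w (cor \<alpha>) \<notin> PP" using PP_neg by blast
    have "nn (w \<circ> sr \<alpha>) = C + 1" using h2 h3 h4 n by simp
    moreover have "nn w = C" using h1 True by simp
    ultimately show ?thesis using True unfolding w_def by simp
  next
    case False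
    hence n: "- w (cor \<alpha>) \<in> PP" using Phi_split[OF wc] by blast
    have "nn (w \<circ> sr \<alpha>) = C" using h2 h3 h4 n by simp
    moreover have "nn w = C + 1" using h1 False by simp
    ultimately show ?thesis using False unfolding w_def by simp
  qed
qed

lemma parity: "set as \<subseteq> Del \<Longrightarrow> (-1::int) ^ nn (wd as) = (-1) ^ length as"
proof (induction as rule: rev_induct)
  case Nil
  show ?case by (simp add: nn_def)
next
  case (snoc a as)
  have as: "set as \<subseteq> Del" and a: "a \<in> Del" using snoc.prems by auto
  note st = nn_step[OF Del_sub_R[OF as] a]
  show ?case
  proof (cases "wd as (cor a) \<in> PP")
    case True
    hence "nn (wd as \<circ> sr a) = nn (wd as) + 1" using st by simp
    hence "nn (wd (as @ [a])) = nn (wd as) + 1" by (subst wd_snoc)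
    thus ?thesis using snoc.IH[OF as] by simp
  next
    case False
    hence "nn (wd as \<circ> sr a) = nn (wd as) - 1" "nn (wd as) \<ge> 1" using st by auto
    hence "nn (wd (as @ [a])) = nn (wd as) - 1" "nn (wd as) \<ge> 1" by (subst wd_snoc, simp, simp)
    moreover have "(-1::int) ^ nn (wd as) = - ((-1) ^ (nn (wd as) - 1))"
    proof -
      obtain k where "nn (wd as) = Suc k" using \<open>nn (wd as) \<ge> 1\<close> by (cases "nn (wd as)") auto
      thus ?thesis by simp
    qed
    ultimately show ?thesis using snoc.IH[OF as] by simp
  qed
qed

lemma del1:
  "set as \<subseteq> Del \<Longrightarrow> b \<in> Del \<Longrightarrow> wd as (cor b) \<notin> PP \<Longrightarrow>
   \<exists>xs a ys. as = xs @ a # ys \<and> wd ys (cor b) = cor a"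
proof (induction as)
  case Nil thus ?case using Del_Rp by auto
next
  case (Cons a as)
  show ?case
  proof (cases "wd as (cor b) \<in> PP")
    case False
    then obtain xs a' ys where "as = xs @ a' # ys" "wd ys (cor b) = cor a'" using Cons by auto
    thus ?thesis by (intro exI[of _ "a # xs"] exI[of _ a'] exI[of _ ys]) auto
  next
    case True
    have a: "a \<in> Del" using Cons.prems by auto
    have "wd as (cor b) = cor a"
    proof (rule ccontr)
      assume "wd as (cor b) \<noteq> cor a"
      hence "sr a (wd as (cor b)) \<in> PP - {cor a}" using bij_betwE[OF sr_PP[OF a]] True by blast
      thus False using Cons.prems by auto
    qed
    thus ?thesis by (intro exI[of _ "[]"] exI[of _ a] exI[of _ as]) auto
  qed
qed

lemma del2:
  assumes ys: "set ys \<subseteq> Del" and a: "a \<in> Del" and b: "b \<in> Del" and h: "wd ys (cor b) = cor a"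
  shows "wd (xs @ a # ys @ [b]) = wd (xs @ ys)"
proof -
  have ysR: "set ys \<subseteq> R" using Del_sub_R[OF ys] .
  have "cor (wdX ys b) = cor a" using cor_wdX[OF ysR Del_R[OF b]] h by simp
  hence "wdX ys b = a" using injcor wdX_R[OF ysR Del_R[OF b]] Del_R[OF a] by (meson inj_onD)
  hence sa: "sr a = wd ys \<circ> sr b \<circ> wd (rev ys)" using conj[OF ysR Del_R[OF b]] by simp
  have k: "sr a (wd ys (sr b x)) = wd ys x" for x
    using sa wd_rev1[OF ysR] sr_invol[OF Del_R[OF b]] by simp
  show ?thesis
  proof
    fix x show "wd (xs @ a # ys @ [b]) x = wd (xs @ ys) x" using k by (simp add: wd_append)
  qed
qed

lemma deletion: "set as \<subseteq> Del \<Longrightarrow>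
  nn (wd as) = length as \<or> (\<exists>bs. set bs \<subseteq> Del \<and> length bs < length as \<and> wd bs = wd as)"
proof (induction as rule: rev_induct)
  case Nil thus ?case unfolding nn_def by simp
next
  case (snoc b as)
  have as: "set as \<subseteq> Del" and b: "b \<in> Del" using snoc.prems by auto
  from snoc.IH[OF as] show ?case
  proof
    assume n: "nn (wd as) = length as"
    show ?thesis
    proof (cases "wd as (cor b) \<in> PP")
      case True
      hence "nn (wd as \<circ> sr b) = length as + 1" using nn_step[OF Del_sub_R[OF as] b] n by simp
      hence "nn (wd (as @ [b])) = length (as @ [b])" by (subst wd_snoc) simp
      thus ?thesis by simp
    next
      case False
      then obtain xs a ys where d: "as = xs @ a # ys" "wd ys (cor b) = cor a"
        using del1[OF as b] by auto
      have "wd (as @ [b]) = wd (xs @ ys)" using del2[of ys a b xs] d as b by auto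
      thus ?thesis using d as by (intro disjI2 exI[of _ "xs @ ys"]) auto
    qed
  next
    assume "\<exists>bs. set bs \<subseteq> Del \<and> length bs < length as \<and> wd bs = wd as"
    then obtain bs where "set bs \<subseteq> Del" "length bs < length as" "wd bs = wd as" by auto
    thus ?thesis using b by (intro disjI2 exI[of _ "bs @ [b]"]) (auto simp: wd_snoc)
  qed
qed

lemma wlength_eq: assumes as: "set as \<subseteq> Del"
  shows "wlength Rp cor (wd as) = nn (wd as)"
proof -
  define Q where "Q = (\<lambda>n. \<exists>bs. set bs \<subseteq> Del \<and> length bs = n \<and> foldr (\<lambda>a f. sr a \<circ> f) bs id = wd as)"
  have wl: "wlength Rp cor (wd as) = (LEAST n. Q n)" unfolding wlength_def Q_def ..
  have "Q (length as)" using as unfolding Q_def wd_def by auto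
  hence "Q (LEAST n. Q n)" by (rule LeastI)
  then obtain bs where bs: "set bs \<subseteq> Del" "length bs = (LEAST n. Q n)" "wd bs = wd as"
    unfolding Q_def wd_def by auto
  from deletion[OF bs(1)] show ?thesis
  proof
    assume "nn (wd bs) = length bs" thus ?thesis using bs wl by simp
  next
    assume "\<exists>cs. set cs \<subseteq> Del \<and> length cs < length bs \<and> wd cs = wd bs"
    then obtain cs where cs: "set cs \<subseteq> Del" "length cs < length bs" "wd cs = wd bs" by auto
    have "Q (length cs)" unfolding Q_def wd_def[symmetric] using cs bs by auto
    hence "(LEAST n. Q n) \<le> length cs" by (rule Least_le)
    thus ?thesis using cs bs by simp
  qed
qed

lemma sign_word: "set as \<subseteq> Del \<Longrightarrow> (-1::int) ^ wlength Rp cor (wd as) = (-1) ^ length as"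
  using wlength_eq parity by simp

lemma wd_tt: assumes as: "set as \<subseteq> R"
  shows "wd as tt = tt - sm 2 (\<Sum>g\<in>NN (wd as). g)"
proof -
  define w where "w = wd as"
  define N where "N = NN w"
  have injw: "inj w" unfolding w_def by (rule wd_inj[OF as])
  have NP: "N \<subseteq> PP" unfolding N_def NN_def by auto
  have fN: "finite N" using NP finPP finite_subset by auto
  have e0: "w tt = (\<Sum>\<gamma>\<in>PP. w \<gamma>)" unfolding tt_def w_def by (rule wd_sum)
  have e1: "(\<Sum>\<gamma>\<in>PP. w \<gamma>) = (\<Sum>\<delta>\<in>w ` PP. \<delta>)"
    using sum.reindex[OF inj_on_subset[OF injw subset_UNIV], of "\<lambda>x. x" PP] by simp
  have e2: "w ` PP = (PP - N) \<union> uminus ` N"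
  proof (intro equalityI subsetI)
    fix x assume x: "x \<in> w ` PP"
    then obtain \<gamma> where g: "\<gamma> \<in> PP" "x = w \<gamma>" by auto
    have xPhi: "x \<in> Phi" using g wd_Phi[OF as] PP_Phi unfolding w_def by blast
    show "x \<in> (PP - N) \<union> uminus ` N"
    proof (cases "x \<in> PP")
      case True
      hence "x \<in> PP - N" using x unfolding N_def NN_def by blast
      thus ?thesis by blast
    next
      case False
      hence mx: "- x \<in> PP" using Phi_split[OF xPhi] by auto
      have "- x \<notin> w ` PP"
      proof
        assume "- x \<in> w ` PP"
        then obtain \<gamma>' where "\<gamma>' \<in> PP" "- x = w \<gamma>'" by auto
        hence "w (- \<gamma>) = w \<gamma>'" using g w_def wd_uminus by simp
        hence "- \<gamma> = \<gamma>'" using injw by (meson injD)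
        thus False using \<open>\<gamma>' \<in> PP\<close> PP_neg[OF g(1)] by simp
      qed
      hence "- x \<in> N" using mx unfolding N_def NN_def by blast
      hence "- (- x) \<in> uminus ` N" by blast
      thus ?thesis by simp
    qed
  next
    fix x assume x: "x \<in> (PP - N) \<union> uminus ` N"
    show "x \<in> w ` PP"
    proof (cases "x \<in> PP - N")
      case True thus ?thesis unfolding N_def NN_def by blast
    next
      case False
      then obtain \<gamma> where g: "\<gamma> \<in> N" "x = - \<gamma>" using x by auto
      have gP: "\<gamma> \<in> PP" "\<gamma> \<notin> w ` PP" using g unfolding N_def NN_def by blast+
      have wP: "w ` Phi = Phi" unfolding w_def by (rule bij_betw_imp_surj_on[OF wd_Phi_bij[OF as]])
      have "\<gamma> \<in> Phi" using gP(1) PP_Phi by (rule subsetD[rotated])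
      hence "\<gamma> \<in> w ` Phi" using wP by simp
      then obtain \<delta> where d: "\<delta> \<in> Phi" "\<gamma> = w \<delta>" by (rule imageE) simp
      have "\<delta> \<notin> PP"
      proof
        assume "\<delta> \<in> PP"
        hence "w \<delta> \<in> w ` PP" by (rule imageI)
        thus False using d(2) gP(2) by simp
      qed
      hence md: "- \<delta> \<in> PP" using Phi_split[OF d(1)] by blast
      have "w (- \<delta>) = - w \<delta>" unfolding w_def by (rule wd_uminus)
      hence "w (- \<delta>) = x" using d(2) g(2) by simp
      thus ?thesis using md by (metis imageI)
    qed
  qed
  have e3: "(\<Sum>\<delta>\<in>(PP - N) \<union> uminus ` N. \<delta>) = (\<Sum>\<delta>\<in>PP - N. \<delta>) + (\<Sum>\<delta>\<in>uminus ` N. \<delta>)"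
  proof (rule sum.union_disjoint)
    show "finite (PP - N)" using finPP by simp
    show "finite (uminus ` N)" using fN by simp
    show "(PP - N) \<inter> uminus ` N = {}"
    proof (rule equals0I)
      fix x assume "x \<in> (PP - N) \<inter> uminus ` N"
      then obtain \<gamma> where "\<gamma> \<in> N" "x = - \<gamma>" "x \<in> PP" by blast
      thus False using NP PP_neg by blast
    qed
  qed
  have e4: "(\<Sum>\<delta>\<in>uminus ` N. \<delta>) = - (\<Sum>\<delta>\<in>N. \<delta>)"
  proof -
    have "inj_on uminus N" by (simp add: inj_on_def)
    hence "(\<Sum>\<delta>\<in>uminus ` N. \<delta>) = (\<Sum>\<delta>\<in>N. - \<delta>)" using sum.reindex[of uminus N "\<lambda>x. x"] by simp
    thus ?thesis by (simp add: sum_negf)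
  qed
  have e5: "(\<Sum>\<delta>\<in>PP - N. \<delta>) = tt - (\<Sum>\<delta>\<in>N. \<delta>)"
    unfolding tt_def using sum_diff[OF finPP NP] by simp
  have "w tt = (tt - (\<Sum>\<delta>\<in>N. \<delta>)) + - (\<Sum>\<delta>\<in>N. \<delta>)"
    unfolding e0 e1 e2 e3 e4 e5 ..
  also have "\<dots> = tt - sm 2 (\<Sum>\<delta>\<in>N. \<delta>)" by (simp add: fun_eq_iff)
  finally show ?thesis unfolding w_def N_def .
qed

lemma rhodiff_eq: "set as \<subseteq> R \<Longrightarrow> rhodiff Rp cor (wd as) = (\<Sum>g\<in>NN (wd as). g)"
proof -
  assume as: "set as \<subseteq> R"
  have tr: "(\<lambda>i. \<Sum>g\<in>PP. g i) = tt" unfolding tt_def by (simp add: fun_eq_iff sum_fun_apply)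
  show ?thesis unfolding rhodiff_def Let_def tr wd_tt[OF as] by (simp add: fun_eq_iff)
qed

lemma NN_sub: "NN w \<subseteq> PP" unfolding NN_def by auto

lemma stab_tt: assumes as: "set as \<subseteq> Del" and h: "wd as tt = tt" shows "wd as = id"
proof -
  define w where "w = wd as"
  have asR: "set as \<subseteq> R" using Del_sub_R[OF as] .
  have "sm 2 (\<Sum>g\<in>NN w. g) = 0" using wd_tt[OF asR] h w_def by simp
  hence "(\<Sum>g\<in>NN w. g) = 0" by (simp add: fun_eq_iff)
  hence N0: "NN w = {}" using sumPP0 NN_sub by blast
  have sub: "PP \<subseteq> w ` PP" using N0 unfolding NN_def by auto
  have "card (w ` PP) = card PP" using wd_inj[OF asR] w_def by (simp add: card_image inj_on_subset)
  hence eq: "PP = w ` PP" using card_subset_eq[OF finite_imageI[OF finPP] sub] by simp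
  have "{\<gamma>\<in>PP. w \<gamma> \<notin> PP} = {}" using eq by auto
  hence "nn w = 0" unfolding nn_def by (simp only: card.empty)
  hence wl: "wlength Rp cor w = 0" using wlength_eq[OF as] w_def by simp
  define Q where "Q = (\<lambda>n. \<exists>bs. set bs \<subseteq> Del \<and> length bs = n \<and> foldr (\<lambda>a f. sr a \<circ> f) bs id = w)"
  have "Q (length as)" using as unfolding Q_def w_def wd_def by auto
  hence "Q (LEAST n. Q n)" by (rule LeastI)
  hence "Q 0" using wl unfolding wlength_def Q_def by simp
  thus ?thesis unfolding Q_def w_def by auto
qed

abbreviation "W \<equiv> weyl_group R cor"

lemma W_word: "w \<in> W \<Longrightarrow> \<exists>as. set as \<subseteq> Del \<and> w = wd as" by (rule weyl_Del_word)

lemma inj_tt: assumes w1: "w1 \<in> W" and w2: "w2 \<in> W" and h: "w1 tt = w2 tt" shows "w1 = w2"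
proof -
  obtain as1 where a1: "set as1 \<subseteq> Del" "w1 = wd as1" using W_word[OF w1] by auto
  obtain as2 where a2: "set as2 \<subseteq> Del" "w2 = wd as2" using W_word[OF w2] by auto
  have e: "wd as2 tt = wd as1 tt" using h a1 a2 by simp
  have "wd (rev as1 @ as2) tt = wd (rev as1) (wd as1 tt)" by (simp add: wd_append e)
  also have "\<dots> = tt" by (rule wd_rev1[OF Del_sub_R[OF a1(1)]])
  finally have "wd (rev as1 @ as2) tt = tt" .
  hence "wd (rev as1 @ as2) = id" using a1 a2 by (intro stab_tt) auto
  hence i: "wd (rev as1) (wd as2 x) = x" for x by (simp add: wd_append fun_eq_iff)
  have "wd as1 (wd (rev as1) (wd as2 x)) = wd as1 x" for x by (simp only: i)
  hence "wd as2 = wd as1" using wd_rev2[OF Del_sub_R[OF a1(1)]] by auto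
  thus ?thesis using a1 a2 by simp
qed

lemma W_tt_in: "w \<in> W \<Longrightarrow> w tt \<in> (\<lambda>S. tt - sm 2 (\<Sum>g\<in>S. g)) ` Pow PP"
proof -
  assume "w \<in> W"
  then obtain as where as: "set as \<subseteq> R" "w = wd as" using weyl_word by auto
  show ?thesis using wd_tt[OF as(1)] as NN_sub by auto
qed

lemma finW: "finite W"
proof -
  have "inj_on (\<lambda>w. w tt) W" by (rule inj_onI) (rule inj_tt)
  moreover have "(\<lambda>w. w tt) ` W \<subseteq> (\<lambda>S. tt - sm 2 (\<Sum>g\<in>S. g)) ` Pow PP" using W_tt_in by auto
  moreover have "finite ((\<lambda>S. tt - sm 2 (\<Sum>g\<in>S. g)) ` Pow PP)" using finPP by simp
  ultimately have "finite ((\<lambda>w. w tt) ` W)" using finite_subset by blast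
  thus ?thesis using finite_imageD \<open>inj_on (\<lambda>w. w tt) W\<close> by blast
qed

end


context RD begin

definition ff where "ff S = tt - sm 2 (\<Sum>g\<in>S. g)"
definition GG where "GG \<nu> = (\<Sum>S\<in>{S. S \<subseteq> PP \<and> ff S = \<nu>}. (-1::int) ^ card S)"

definition phi where "phi \<alpha> S = sr \<alpha> ` (S - {cor \<alpha>}) \<union> (if cor \<alpha> \<in> S then {} else {cor \<alpha>})"

lemma finite_PowPP: "finite {S. S \<subseteq> PP \<and> Q S}"
  using finPP by (rule finite_subset[rotated, OF finite_Pow_iff[THEN iffD2]]) auto

lemma phi_props:
  assumes a: "\<alpha> \<in> Del" and S: "S \<subseteq> PP"
  shows "phi \<alpha> S \<subseteq> PP" "phi \<alpha> (phi \<alpha> S) = S" "ff (phi \<alpha> S) = sr \<alpha> (ff S)"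
    "(-1::int) ^ card (phi \<alpha> S) = - ((-1) ^ card S)"
proof -
  define c where "c = cor \<alpha>"
  have aR: "\<alpha> \<in> R" using Del_R[OF a] .
  have cP: "c \<in> PP" unfolding c_def using Del_Rp[OF a] by simp
  have bij: "bij_betw (sr \<alpha>) (PP - {c}) (PP - {c})" unfolding c_def by (rule sr_PP[OF a])
  have img: "sr \<alpha> ` (S - {c}) \<subseteq> PP - {c}"
  proof
    fix y assume "y \<in> sr \<alpha> ` (S - {c})"
    then obtain z where z: "z \<in> S - {c}" "y = sr \<alpha> z" by blast
    hence "z \<in> PP - {c}" using S by blast
    thus "y \<in> PP - {c}" using bij_betwE[OF bij] z by blast
  qed
  have injs: "inj (sr \<alpha>)" using sr_invol[OF aR] by (metis injI)
  have fS: "finite S" using S finPP finite_subset by auto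
  show p1: "phi \<alpha> S \<subseteq> PP" unfolding phi_def c_def[symmetric] using img cP by auto
  have inv: "sr \<alpha> ` sr \<alpha> ` (S - {c}) = S - {c}"
    using sr_invol[OF aR] by (auto simp: image_iff)
  have cn: "c \<notin> sr \<alpha> ` (S - {c})" using img by auto
  have pd: "phi \<alpha> S - {c} = sr \<alpha> ` (S - {c})" unfolding phi_def c_def[symmetric] using cn by auto
  have pc: "(c \<in> phi \<alpha> S) = (c \<notin> S)" unfolding phi_def c_def[symmetric] using cn by auto
  show "phi \<alpha> (phi \<alpha> S) = S"
  proof -
    have "phi \<alpha> (phi \<alpha> S) = sr \<alpha> ` (phi \<alpha> S - {c}) \<union> (if c \<in> phi \<alpha> S then {} else {c})"
      unfolding phi_def c_def ..
    also have "\<dots> = (S - {c}) \<union> (if c \<in> S then {c} else {})" using pd pc inv by simp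
    also have "\<dots> = S" by auto
    finally show ?thesis .
  qed
  have sum_phi: "(\<Sum>g\<in>phi \<alpha> S. g) = (\<Sum>g\<in>S - {c}. sr \<alpha> g) + (if c \<in> S then 0 else c)"
  proof -
    have "(\<Sum>g\<in>phi \<alpha> S. g) = (\<Sum>g\<in>sr \<alpha> ` (S - {c}). g) + (\<Sum>g\<in>(if c \<in> S then {} else {c}). g)"
      unfolding phi_def c_def[symmetric] using fS cn by (intro sum.union_disjoint) auto
    also have "(\<Sum>g\<in>sr \<alpha> ` (S - {c}). g) = (\<Sum>g\<in>S - {c}. sr \<alpha> g)"
      using sum.reindex[OF inj_on_subset[OF injs subset_UNIV], of "\<lambda>x. x" "S - {c}"] by simp
    finally show ?thesis by (cases "c \<in> S") (simp_all add: fun_eq_iff)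
  qed
  have sum_S: "sr \<alpha> (\<Sum>g\<in>S. g) = (\<Sum>g\<in>S - {c}. sr \<alpha> g) + (if c \<in> S then - c else 0)"
  proof (cases "c \<in> S")
    case True
    have "(\<Sum>g\<in>S. sr \<alpha> g) = sr \<alpha> c + (\<Sum>g\<in>S - {c}. sr \<alpha> g)" using fS True by (simp add: sum.remove)
    thus ?thesis using True sr_self[OF aR] c_def by (simp add: sr_sum add.commute)
  next
    case False
    hence "S - {c} = S" by simp
    thus ?thesis using False by (simp add: sr_sum)
  qed
  have stt: "sr \<alpha> tt = tt - sm 2 c" unfolding c_def by (rule sr_tt[OF a])
  show "ff (phi \<alpha> S) = sr \<alpha> (ff S)"
    unfolding ff_def sr_diff sr_sm sum_phi sum_S stt by (auto simp: fun_eq_iff)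
  have cphi: "card (phi \<alpha> S) = card (S - {c}) + (if c \<in> S then 0 else 1)"
  proof -
    have "card (phi \<alpha> S) = card (sr \<alpha> ` (S - {c})) + card (if c \<in> S then {} else {c})"
      unfolding phi_def c_def[symmetric] using fS cn by (intro card_Un_disjoint) auto
    moreover have "card (sr \<alpha> ` (S - {c})) = card (S - {c})"
      using card_image[OF inj_on_subset[OF injs subset_UNIV]] by simp
    ultimately show ?thesis by simp
  qed
  have cS: "card S = card (S - {c}) + (if c \<in> S then 1 else 0)"
  proof (cases "c \<in> S")
    case True
    have "card S > 0" using fS True card_gt_0_iff by blast
    thus ?thesis using True card_Diff_singleton[OF True] by simp
  qed simp
  obtain n where n: "card (S - {c}) = n" by blast
  have c1: "card (phi \<alpha> S) = n + (if c \<in> S then 0 else 1)" using cphi n by simp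
  have c2: "card S = n + (if c \<in> S then 1 else 0)" using cS n by simp
  show "(-1::int) ^ card (phi \<alpha> S) = - ((-1) ^ card S)"
    unfolding c1 c2 by (cases "c \<in> S") simp_all
qed

lemma GG_anti: assumes a: "\<alpha> \<in> Del" shows "GG (sr \<alpha> \<nu>) = - GG \<nu>"
proof -
  have aR: "\<alpha> \<in> R" using Del_R[OF a] .
  have "GG (sr \<alpha> \<nu>) = (\<Sum>T\<in>{S. S \<subseteq> PP \<and> ff S = \<nu>}. - ((-1::int) ^ card T))"
    unfolding GG_def
  proof (rule sum.reindex_bij_witness[where i = "phi \<alpha>" and j = "phi \<alpha>"])
    fix S assume S: "S \<in> {S. S \<subseteq> PP \<and> ff S = sr \<alpha> \<nu>}"
    show "phi \<alpha> (phi \<alpha> S) = S" using phi_props[OF a] S by auto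
    have "ff (phi \<alpha> S) = sr \<alpha> (sr \<alpha> \<nu>)" using phi_props[OF a] S by auto
    thus "phi \<alpha> S \<in> {S. S \<subseteq> PP \<and> ff S = \<nu>}" using phi_props[OF a] S sr_invol[OF aR] by auto
    show "- ((-1::int) ^ card (phi \<alpha> S)) = (-1) ^ card S" using phi_props[OF a] S by auto
  next
    fix T assume T: "T \<in> {S. S \<subseteq> PP \<and> ff S = \<nu>}"
    show "phi \<alpha> (phi \<alpha> T) = T" using phi_props[OF a] T by auto
    show "phi \<alpha> T \<in> {S. S \<subseteq> PP \<and> ff S = sr \<alpha> \<nu>}" using phi_props[OF a] T by auto
  qed
  also have "\<dots> = - GG \<nu>" unfolding GG_def by (simp add: sum_negf)
  finally show ?thesis .
qed

lemma GG_word: "set as \<subseteq> Del \<Longrightarrow> GG (wd as \<nu>) = (-1) ^ length as * GG \<nu>"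
proof (induction as)
  case Nil thus ?case by simp
next
  case (Cons a as)
  hence "GG (wd (a # as) \<nu>) = - GG (wd as \<nu>)" using GG_anti by simp
  thus ?case using Cons by simp
qed

lemma GG_W: "w \<in> W \<Longrightarrow> GG (w \<nu>) = (-1) ^ wlength Rp cor w * GG \<nu>"
proof -
  assume "w \<in> W"
  then obtain as where as: "set as \<subseteq> Del" "w = wd as" using W_word by auto
  show ?thesis using GG_word[OF as(1)] sign_word[OF as(1)] as(2) by simp
qed

lemma ff_tt: "S \<subseteq> PP \<Longrightarrow> ff S = tt \<longleftrightarrow> S = {}"
proof
  assume S: "S \<subseteq> PP" "ff S = tt"
  hence "sm 2 (\<Sum>g\<in>S. g) = 0" unfolding ff_def by simp
  hence "(\<Sum>g\<in>S. g) = 0" by (simp add: fun_eq_iff)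
  thus "S = {}" using sumPP0 S by blast
qed (simp add: ff_def)

lemma GG_tt: "GG tt = 1"
proof -
  have "{S. S \<subseteq> PP \<and> ff S = tt} = {{}}" using ff_tt by auto
  thus ?thesis unfolding GG_def by simp
qed

lemma W_step: "w \<in> W \<Longrightarrow> a \<in> R \<Longrightarrow> sr a \<circ> w \<in> W" by (rule weyl_step)
lemma W_id: "id \<in> W" by (rule weyl_id)

lemma L1: assumes G: "GG \<nu> \<noteq> 0" shows "\<exists>w\<in>W. \<nu> = w tt"
proof -
  define Orb where "Orb = (\<lambda>w. w \<nu>) ` W"
  have fO: "finite Orb" unfolding Orb_def using finW by simp
  have nO: "\<nu> \<in> Orb" unfolding Orb_def using W_id by (metis id_apply image_eqI)
  define h where "h = (\<lambda>x. pair rr x)"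
  have "Max (h ` Orb) \<in> h ` Orb" using fO nO by (intro Max_in) auto
  then obtain x where x: "x \<in> Orb" "h x = Max (h ` Orb)" by (metis imageE)
  have xmax: "h y \<le> h x" if "y \<in> Orb" for y using x fO that by simp
  obtain w0 where w0: "w0 \<in> W" "x = w0 \<nu>" using x unfolding Orb_def by auto
  have Gx: "GG x \<noteq> 0" using GG_W[OF w0(1)] w0 G by simp
  have pos: "pair \<alpha> x \<ge> 1" if a: "\<alpha> \<in> Del" for \<alpha>
  proof -
    have "sr \<alpha> x = (sr \<alpha> \<circ> w0) \<nu>" using w0 by simp
    hence "sr \<alpha> x \<in> Orb" unfolding Orb_def using W_step[OF w0(1) Del_R[OF a]] by (rule image_eqI)
    hence "h (sr \<alpha> x) \<le> h x" by (rule xmax)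
    moreover have "h (sr \<alpha> x) = h x - pair \<alpha> x * 2"
      unfolding h_def by (simp add: corefl_eq pair_simps pair_rr_simple[OF a])
    ultimately have ge: "pair \<alpha> x \<ge> 0" by simp
    have "pair \<alpha> x \<noteq> 0"
    proof
      assume "pair \<alpha> x = 0"
      hence "sr \<alpha> x = x" by (simp add: corefl_eq)
      hence "GG x = - GG x" using GG_anti[OF a, of x] by simp
      thus False using Gx by simp
    qed
    thus ?thesis using ge by simp
  qed
  obtain S where S: "S \<subseteq> PP" "ff S = x"
  proof -
    have "{S. S \<subseteq> PP \<and> ff S = x} \<noteq> {}"
    proof
      assume "{S. S \<subseteq> PP \<and> ff S = x} = {}"
      hence "GG x = 0" unfolding GG_def by (simp only: sum.empty)
      thus False using Gx by simp
    qed
    thus ?thesis using that by blast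
  qed
  have le: "pair \<alpha> (\<Sum>g\<in>S. g) \<le> 0" if a: "\<alpha> \<in> Del" for \<alpha>
  proof -
    have "pair \<alpha> x = pair \<alpha> (tt - sm 2 (\<Sum>g\<in>S. g))" using S(2) unfolding ff_def by simp
    also have "\<dots> = 2 - 2 * pair \<alpha> (\<Sum>g\<in>S. g)"
      by (simp only: pair_diff2 pair_sm2 pair_tt_simple[OF a])
    finally have "pair \<alpha> x = 2 - 2 * pair \<alpha> (\<Sum>g\<in>S. g)" .
    thus ?thesis using pos[OF a] by simp
  qed
  have "pair rr (\<Sum>g\<in>S. g) = (\<Sum>\<beta>\<in>Rp. pair \<beta> (\<Sum>g\<in>S. g))" unfolding rr_def by (rule pair_sum1)
  also have "\<dots> \<le> 0" using pair_Rp_nonpos le by (intro sum_nonpos) blast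
  finally have np: "pair rr (\<Sum>g\<in>S. g) \<le> 0" .
  have "S = {}"
  proof (rule ccontr)
    assume ne: "S \<noteq> {}"
    have fS: "finite S" using S finPP finite_subset by auto
    have "pair rr (\<Sum>g\<in>S. g) = (\<Sum>g\<in>S. pair rr g)" by (rule pair_sum2)
    also have "\<dots> > 0" using fS ne S PP_pos by (intro sum_pos) auto
    finally show False using np by simp
  qed
  hence "x = tt" using S unfolding ff_def by simp
  obtain as where as: "set as \<subseteq> R" "w0 = wd as" using weyl_word[OF w0(1)] by auto
  have "\<nu> = wd (rev as) tt" using w0(2) \<open>x = tt\<close> as wd_rev1[OF as(1)] by metis
  moreover have "wd (rev as) \<in> W" using as by (intro word_weyl) auto
  ultimately show ?thesis by blast
qed

lemma W_rhodiff: assumes w: "w \<in> W" shows "w tt = tt - sm 2 (rhodiff Rp cor w)"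
  "rhodiff Rp cor w = (\<Sum>g\<in>NN w. g)" "NN w \<subseteq> PP"
proof -
  obtain as where as: "set as \<subseteq> R" "w = wd as" using weyl_word[OF w] by auto
  show "w tt = tt - sm 2 (rhodiff Rp cor w)" using wd_tt[OF as(1)] rhodiff_eq[OF as(1)] as(2) by simp
  show "rhodiff Rp cor w = (\<Sum>g\<in>NN w. g)" using rhodiff_eq[OF as(1)] as(2) by simp
  show "NN w \<subseteq> PP" by (rule NN_sub)
qed

lemma denominator:
  "(\<Sum>w\<in>W. (-1::int) ^ wlength Rp cor w * (if rhodiff Rp cor w = \<mu> then 1 else 0))
   = (\<Sum>S\<in>{S. S \<subseteq> PP \<and> (\<Sum>g\<in>S. g) = \<mu>}. (-1) ^ card S)"
proof -
  define \<nu> where "\<nu> = tt - sm 2 \<mu>"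
  have eqv: "rhodiff Rp cor w = \<mu> \<longleftrightarrow> w tt = \<nu>" if w: "w \<in> W" for w
    unfolding \<nu>_def W_rhodiff(1)[OF w] by (auto simp: fun_eq_iff)
  have r: "{S. S \<subseteq> PP \<and> (\<Sum>g\<in>S. g) = \<mu>} = {S. S \<subseteq> PP \<and> ff S = \<nu>}"
    unfolding ff_def \<nu>_def by (auto simp: fun_eq_iff)
  have lhs: "(\<Sum>w\<in>W. (-1::int) ^ wlength Rp cor w * (if rhodiff Rp cor w = \<mu> then 1 else 0))
      = (\<Sum>w\<in>{w\<in>W. w tt = \<nu>}. (-1::int) ^ wlength Rp cor w)"
  proof -
    have "(\<Sum>w\<in>W. (-1::int) ^ wlength Rp cor w * (if rhodiff Rp cor w = \<mu> then 1 else 0))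
      = (\<Sum>w\<in>W. if w tt = \<nu> then (-1::int) ^ wlength Rp cor w else 0)"
      by (rule sum.cong) (use eqv in auto)
    also have "\<dots> = (\<Sum>w\<in>{w\<in>W. w tt = \<nu>}. (-1::int) ^ wlength Rp cor w)"
      by (rule sum.inter_filter[symmetric, OF finW])
    finally show ?thesis .
  qed
  show ?thesis
  proof (cases "\<exists>w0\<in>W. w0 tt = \<nu>")
    case True
    then obtain w0 where w0: "w0 \<in> W" "w0 tt = \<nu>" by auto
    have e: "{w\<in>W. w tt = \<nu>} = {w0}" using inj_tt w0 by auto
    have z: "(\<Sum>w\<in>{w\<in>W. w tt = \<nu>}. (-1::int) ^ wlength Rp cor w) = (-1) ^ wlength Rp cor w0"
      unfolding e by simp
    have "GG \<nu> = (-1) ^ wlength Rp cor w0" using GG_W[OF w0(1), of tt] GG_tt w0 by simp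
    thus ?thesis unfolding lhs z r GG_def by simp
  next
    case False
    hence e: "{w\<in>W. w tt = \<nu>} = {}" by auto
    have z: "(\<Sum>w\<in>{w\<in>W. w tt = \<nu>}. (-1::int) ^ wlength Rp cor w) = 0"
      by (simp only: e sum.empty)
    have "GG \<nu> = 0" using L1 False by metis
    thus ?thesis unfolding lhs z r GG_def by simp
  qed
qed

end


definition vsum :: "'i set \<Rightarrow> ('i \<Rightarrow> nat) \<Rightarrow> ('i \<Rightarrow> ('n \<Rightarrow> int)) \<Rightarrow> ('n \<Rightarrow> int)" where
  "vsum I c f = (\<lambda>k. \<Sum>x\<in>I. int (c x) * f x k)"

definition CCg :: "'i set \<Rightarrow> ('i \<Rightarrow> ('n \<Rightarrow> int)) \<Rightarrow> ('n \<Rightarrow> int) \<Rightarrow> ('i \<Rightarrow> nat) set" where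
  "CCg I f z = {c \<in> I \<rightarrow>\<^sub>E (UNIV :: nat set). vsum I c f = z}"

definition gpg :: "'i set \<Rightarrow> ('i \<Rightarrow> ('n \<Rightarrow> int)) \<Rightarrow> real \<Rightarrow> ('n \<Rightarrow> int) \<Rightarrow> real" where
  "gpg I f t z = (\<Sum>c\<in>CCg I f z. t ^ (\<Sum>x\<in>I. c x))"

definition IM :: "('n \<Rightarrow> int) multiset \<Rightarrow> (('n \<Rightarrow> int) \<times> nat) set" where
  "IM M = {(v, j). j < count M v}"

lemma geom_poly_eq: "geom_poly M mu = (\<Sum>c\<in>CCg (IM M) fst mu. monom 1 (\<Sum>x\<in>IM M. c x))"
  unfolding geom_poly_def CCg_def IM_def vsum_def Let_def ..

lemma map_poly_of_int_add: "map_poly (of_int :: int \<Rightarrow> real) (p + q) = map_poly of_int p + map_poly of_int q"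
  by (rule poly_eqI) (simp add: coeff_map_poly)

lemma map_poly_of_int_sum: "map_poly (of_int :: int \<Rightarrow> real) (\<Sum>c\<in>C. p c) = (\<Sum>c\<in>C. map_poly of_int (p c))"
  by (induction C rule: infinite_finite_induct) (simp_all add: map_poly_of_int_add)

lemma poly_geom: "poly (map_poly (of_int :: int \<Rightarrow> real) (geom_poly M mu)) t = gpg (IM M) fst t mu"
  unfolding geom_poly_eq gpg_def map_poly_of_int_sum poly_sum by (simp add: map_poly_monom poly_monom)

lemma poly_geom1: "real_of_int (poly (geom_poly M mu) 1) = gpg (IM M) fst 1 mu"
  unfolding geom_poly_eq gpg_def poly_sum by (simp add: poly_monom)

lemma geom_nz: "geom_poly M mu \<noteq> 0 \<Longrightarrow> CCg (IM M) fst mu \<noteq> {}"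
  unfolding geom_poly_eq by auto

lemma gpg_nz: "gpg I f t z \<noteq> 0 \<Longrightarrow> CCg I f z \<noteq> {}"
  unfolding gpg_def by auto

lemma vsum_sm: "vsum I c f = (\<Sum>x\<in>I. sm (int (c x)) (f x))"
  unfolding vsum_def by (simp add: fun_eq_iff sum_fun_apply)

lemma pair_vsum: "pair \<phi> (vsum I c f) = (\<Sum>x\<in>I. int (c x) * pair \<phi> (f x))"
  unfolding vsum_sm by (simp add: pair_sum2 pair_sm2)

lemma CCg_bound:
  assumes fin: "finite I" and pos: "\<forall>x\<in>I. pair \<phi> (f x) \<ge> 1" and c: "c \<in> CCg I f z"
  shows "(\<Sum>x\<in>I. c x) \<le> nat (pair \<phi> z)"
proof -
  have "pair \<phi> z = (\<Sum>x\<in>I. int (c x) * pair \<phi> (f x))" using c unfolding CCg_def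
    by (simp add: pair_vsum[symmetric])
  also have "\<dots> \<ge> (\<Sum>x\<in>I. int (c x))"
    by (rule sum_mono) (use pos in \<open>auto intro: mult_le_cancel_left1[THEN iffD2]\<close>)
  finally have "(\<Sum>x\<in>I. int (c x)) \<le> pair \<phi> z" .
  hence "int (\<Sum>x\<in>I. c x) \<le> pair \<phi> z" by (simp add: of_nat_sum)
  thus ?thesis by (metis nat_int nat_mono)
qed

lemma CCg_finite:
  assumes fin: "finite I" and pos: "\<forall>x\<in>I. pair \<phi> (f x) \<ge> 1"
  shows "finite (CCg I f z)"
proof -
  have "CCg I f z \<subseteq> I \<rightarrow>\<^sub>E {0..nat (pair \<phi> z)}"
  proof
    fix c assume c: "c \<in> CCg I f z"
    have b: "(\<Sum>x\<in>I. c x) \<le> nat (pair \<phi> z)" by (rule CCg_bound[OF fin pos c])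
    have "c x \<le> nat (pair \<phi> z)" if "x \<in> I" for x
      using member_le_sum[OF that _ fin, of c] b by simp
    thus "c \<in> I \<rightarrow>\<^sub>E {0..nat (pair \<phi> z)}" using c unfolding CCg_def by (auto simp: PiE_iff)
  qed
  moreover have "finite (I \<rightarrow>\<^sub>E {0..nat (pair \<phi> z)})" using fin by (simp add: finite_PiE)
  ultimately show ?thesis by (rule finite_subset)
qed

lemma gpg_neg: "gpg I (\<lambda>x. - f x) t z = gpg I f t (- z)"
proof -
  have "vsum I c (\<lambda>x. - f x) = - vsum I c f" for c unfolding vsum_def by (simp add: fun_eq_iff sum_negf)
  hence "CCg I (\<lambda>x. - f x) z = CCg I f (- z)" unfolding CCg_def by (auto simp: minus_equation_iff)
  thus ?thesis unfolding gpg_def by simp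
qed

lemma CCg_reindex:
  fixes h :: "'j \<Rightarrow> 'i" and f :: "'i \<Rightarrow> ('n \<Rightarrow> int)"
  assumes h: "bij_betw h J I"
  shows "\<exists>T. bij_betw T (CCg J (\<lambda>y. f (h y)) z) (CCg I f z) \<and>
     (\<forall>c\<in>CCg J (\<lambda>y. f (h y)) z. (\<Sum>x\<in>I. T c x) = (\<Sum>y\<in>J. c y))"
proof -
  define hi where "hi = the_inv_into J h"
  have hi1: "\<And>y. y \<in> J \<Longrightarrow> hi (h y) = y" unfolding hi_def
    using h by (simp add: bij_betw_def the_inv_into_f_f)
  have hi2: "\<And>x. x \<in> I \<Longrightarrow> h (hi x) = x" unfolding hi_def
    using h by (simp add: bij_betw_def f_the_inv_into_f)
  have hiJ: "\<And>x. x \<in> I \<Longrightarrow> hi x \<in> J" unfolding hi_def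
    using h by (simp add: bij_betw_def the_inv_into_into)
  have hI: "\<And>y. y \<in> J \<Longrightarrow> h y \<in> I" using h by (simp add: bij_betwE)
  define T where "T = (\<lambda>(c::'j \<Rightarrow> nat). \<lambda>x. if x \<in> I then c (hi x) else undefined)"
  define T' where "T' = (\<lambda>(c::'i \<Rightarrow> nat). \<lambda>y. if y \<in> J then c (h y) else undefined)"
  have sI: "(\<Sum>x\<in>I. g x) = (\<Sum>y\<in>J. g (h y))" for g :: "'i \<Rightarrow> 'zz::comm_monoid_add"
    using sum.reindex_bij_betw[OF h, of g] by simp
  have vs: "vsum I (T c) f = vsum J c (\<lambda>y. f (h y))" for c
  proof -
    have "(\<Sum>x\<in>I. int (T c x) * f x k) = (\<Sum>y\<in>J. int (c y) * f (h y) k)" for k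
    proof -
      have "(\<Sum>x\<in>I. int (T c x) * f x k) = (\<Sum>y\<in>J. int (T c (h y)) * f (h y) k)" by (rule sI)
      also have "\<dots> = (\<Sum>y\<in>J. int (c y) * f (h y) k)" by (rule sum.cong) (auto simp: T_def hi1 hI)
      finally show ?thesis .
    qed
    thus ?thesis unfolding vsum_def by (simp add: fun_eq_iff)
  qed
  have ss: "(\<Sum>x\<in>I. T c x) = (\<Sum>y\<in>J. c y)" for c
  proof -
    have "(\<Sum>x\<in>I. T c x) = (\<Sum>y\<in>J. T c (h y))" by (rule sI)
    also have "\<dots> = (\<Sum>y\<in>J. c y)" by (rule sum.cong) (auto simp: T_def hi1 hI)
    finally show ?thesis .
  qed
  have bij: "bij_betw T (CCg J (\<lambda>y. f (h y)) z) (CCg I f z)"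
  proof (rule bij_betw_byWitness[where f' = T'])
    show "\<forall>c\<in>CCg J (\<lambda>y. f (h y)) z. T' (T c) = c"
    proof
      fix c assume c: "c \<in> CCg J (\<lambda>y. f (h y)) z"
      hence ext: "c \<in> extensional J" unfolding CCg_def by (simp add: PiE_iff)
      show "T' (T c) = c"
      proof
        fix y show "T' (T c) y = c y"
          by (cases "y \<in> J") (auto simp: T_def T'_def hi1 hI extensional_arb[OF ext])
      qed
    qed
    show "\<forall>c\<in>CCg I f z. T (T' c) = c"
    proof
      fix c assume c: "c \<in> CCg I f z"
      hence ext: "c \<in> extensional I" unfolding CCg_def by (simp add: PiE_iff)
      show "T (T' c) = c"
      proof
        fix y show "T (T' c) y = c y"
          by (cases "y \<in> I") (auto simp: T_def T'_def hi2 hiJ extensional_arb[OF ext])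
      qed
    qed
    show "T ` CCg J (\<lambda>y. f (h y)) z \<subseteq> CCg I f z"
      using vs unfolding CCg_def T_def by (auto simp: PiE_iff extensional_def)
    show "T' ` CCg I f z \<subseteq> CCg J (\<lambda>y. f (h y)) z"
    proof
      fix c' assume "c' \<in> T' ` CCg I f z"
      then obtain c where c: "c \<in> CCg I f z" "c' = T' c" by auto
      have ext: "c \<in> extensional I" using c unfolding CCg_def by (simp add: PiE_iff)
      have "T (T' c) = c"
      proof
        fix y show "T (T' c) y = c y"
          by (cases "y \<in> I") (auto simp: T_def T'_def hi2 hiJ extensional_arb[OF ext])
      qed
      hence "vsum J (T' c) (\<lambda>y. f (h y)) = vsum I c f" using vs[of "T' c"] by simp
      thus "c' \<in> CCg J (\<lambda>y. f (h y)) z" using c unfolding CCg_def T'_def by (auto simp: PiE_iff extensional_def)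
    qed
  qed
  show ?thesis using bij ss by blast
qed

lemma gpg_reindex:
  assumes h: "bij_betw h J I"
  shows "gpg I f t z = gpg J (\<lambda>y. f (h y)) t z"
    "finite (CCg I f z) \<longleftrightarrow> finite (CCg J (\<lambda>y. f (h y)) z)"
    "CCg I f z = {} \<longleftrightarrow> CCg J (\<lambda>y. f (h y)) z = {}"
proof -
  obtain T where T: "bij_betw T (CCg J (\<lambda>y. f (h y)) z) (CCg I f z)"
    "\<forall>c\<in>CCg J (\<lambda>y. f (h y)) z. (\<Sum>x\<in>I. T c x) = (\<Sum>y\<in>J. c y)"
    using CCg_reindex[OF h] by blast
  show "gpg I f t z = gpg J (\<lambda>y. f (h y)) t z" unfolding gpg_def
    using sum.reindex_bij_betw[OF T(1), of "\<lambda>c. t ^ (\<Sum>x\<in>I. c x)"] T(2) by simp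
  show "finite (CCg I f z) \<longleftrightarrow> finite (CCg J (\<lambda>y. f (h y)) z)" using bij_betw_finite[OF T(1)] by simp
  show "CCg I f z = {} \<longleftrightarrow> CCg J (\<lambda>y. f (h y)) z = {}" using T(1) bij_betw_empty1 bij_betw_empty2 by metis
qed

lemma gpg_union:
  fixes f :: "'i \<Rightarrow> ('n \<Rightarrow> int)"
  assumes f1: "finite I1" and f2: "finite I2" and dj: "I1 \<inter> I2 = {}" and fA: "finite A"
    and A: "\<And>a. CCg I1 f a \<noteq> {} \<Longrightarrow> CCg I2 f (z - a) \<noteq> {} \<Longrightarrow> a \<in> A"
    and fin1: "\<And>a. finite (CCg I1 f a)" and fin2: "\<And>a. finite (CCg I2 f a)"
  shows "gpg (I1 \<union> I2) f t z = (\<Sum>a\<in>A. gpg I1 f t a * gpg I2 f t (z - a))"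
proof -
  define Sig where "Sig = Sigma A (\<lambda>a. CCg I1 f a \<times> CCg I2 f (z - a))"
  define mg where "mg = (\<lambda>p::('n \<Rightarrow> int) \<times> ('i \<Rightarrow> nat) \<times> ('i \<Rightarrow> nat). \<lambda>x. if x \<in> I1 then fst (snd p) x else snd (snd p) x)"
  have vs_split: "vsum (I1 \<union> I2) c f = vsum I1 c f + vsum I2 c f" for c
    unfolding vsum_def using f1 f2 dj by (simp add: fun_eq_iff sum.union_disjoint)
  have s_split: "(\<Sum>x\<in>I1 \<union> I2. c x) = (\<Sum>x\<in>I1. c x) + (\<Sum>x\<in>I2. c x)" for c :: "_ \<Rightarrow> nat"
    using f1 f2 dj by (simp add: sum.union_disjoint)
  have mg1: "vsum I1 (mg p) f = vsum I1 (fst (snd p)) f" for p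
    unfolding vsum_def mg_def by simp
  have mg2: "vsum I2 (mg p) f = vsum I2 (snd (snd p)) f" for p
    unfolding vsum_def mg_def using dj by (auto simp: fun_eq_iff intro!: sum.cong)
  have ms1: "(\<Sum>x\<in>I1. mg p x) = (\<Sum>x\<in>I1. fst (snd p) x)" for p unfolding mg_def by simp
  have ms2: "(\<Sum>x\<in>I2. mg p x) = (\<Sum>x\<in>I2. snd (snd p) x)" for p
    unfolding mg_def using dj by (auto intro!: sum.cong)
  have img: "mg ` Sig = CCg (I1 \<union> I2) f z"
  proof (intro equalityI subsetI)
    fix c assume "c \<in> mg ` Sig"
    then obtain a c1 c2 where p: "a \<in> A" "c1 \<in> CCg I1 f a" "c2 \<in> CCg I2 f (z - a)" "c = mg (a, c1, c2)"
      unfolding Sig_def by auto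
    have "vsum (I1 \<union> I2) c f = a + (z - a)" using p mg1[of "(a,c1,c2)"] mg2[of "(a,c1,c2)"]
      unfolding vs_split CCg_def by simp
    moreover have "c \<in> (I1 \<union> I2) \<rightarrow>\<^sub>E UNIV" using p unfolding CCg_def mg_def by (auto simp: PiE_iff extensional_def)
    ultimately show "c \<in> CCg (I1 \<union> I2) f z" unfolding CCg_def by simp
  next
    fix c assume c: "c \<in> CCg (I1 \<union> I2) f z"
    define c1 where "c1 = restrict c I1"
    define c2 where "c2 = restrict c I2"
    define a where "a = vsum I1 c1 f"
    have v1: "vsum I1 c1 f = vsum I1 c f" unfolding c1_def vsum_def by simp
    have v2: "vsum I2 c2 f = vsum I2 c f" unfolding c2_def vsum_def by simp
    have c1C: "c1 \<in> CCg I1 f a" unfolding CCg_def a_def c1_def by auto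
    have "vsum I2 c2 f = z - a" using c v1 v2 unfolding CCg_def vs_split a_def by (simp add: algebra_simps)
    hence c2C: "c2 \<in> CCg I2 f (z - a)" unfolding CCg_def c2_def by auto
    have aA: "a \<in> A" using A c1C c2C by blast
    have ext: "c \<in> extensional (I1 \<union> I2)" using c unfolding CCg_def by (simp add: PiE_iff)
    have "mg (a, c1, c2) = c"
    proof
      fix x show "mg (a, c1, c2) x = c x"
        using dj extensional_arb[OF ext, of x] by (auto simp: mg_def c1_def c2_def)
    qed
    thus "c \<in> mg ` Sig" using aA c1C c2C unfolding Sig_def by force
  qed
  have inj: "inj_on mg Sig"
  proof (rule inj_onI)
    fix p p' assume p: "p \<in> Sig" and p': "p' \<in> Sig" and e: "mg p = mg p'"
    obtain a c1 c2 where pp: "p = (a, c1, c2)" "a \<in> A" "c1 \<in> CCg I1 f a" "c2 \<in> CCg I2 f (z - a)"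
      using p unfolding Sig_def by auto
    obtain a' c1' c2' where pp': "p' = (a', c1', c2')" "a' \<in> A" "c1' \<in> CCg I1 f a'" "c2' \<in> CCg I2 f (z - a')"
      using p' unfolding Sig_def by auto
    have "c1 x = c1' x" for x
    proof (cases "x \<in> I1")
      case True thus ?thesis using e pp pp' unfolding mg_def by (metis fst_conv snd_conv)
    next
      case False thus ?thesis using pp pp' unfolding CCg_def by (auto simp: PiE_iff extensional_def)
    qed
    hence e1: "c1 = c1'" by auto
    have "c2 x = c2' x" for x
    proof (cases "x \<in> I2")
      case True
      hence "x \<notin> I1" using dj by auto
      thus ?thesis using e pp pp' True unfolding mg_def by (metis fst_conv snd_conv)
    next
      case False thus ?thesis using pp pp' unfolding CCg_def by (auto simp: PiE_iff extensional_def)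
    qed
    hence e2: "c2 = c2'" by auto
    have "a = a'" using pp pp' e1 unfolding CCg_def by auto
    thus "p = p'" using pp pp' e1 e2 by simp
  qed
  have "gpg (I1 \<union> I2) f t z = (\<Sum>p\<in>Sig. t ^ (\<Sum>x\<in>I1 \<union> I2. mg p x))"
    unfolding gpg_def img[symmetric] using sum.reindex[OF inj] by simp
  also have "\<dots> = (\<Sum>p\<in>Sig. t ^ (\<Sum>x\<in>I1. fst (snd p) x) * t ^ (\<Sum>x\<in>I2. snd (snd p) x))"
    by (rule sum.cong) (simp_all add: s_split ms1 ms2 power_add)
  also have "\<dots> = (\<Sum>a\<in>A. \<Sum>q\<in>CCg I1 f a \<times> CCg I2 f (z - a). t ^ (\<Sum>x\<in>I1. fst q x) * t ^ (\<Sum>x\<in>I2. snd q x))"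
    unfolding Sig_def using fA fin1 fin2 by (subst sum.Sigma) (auto simp: split_def)
  also have "\<dots> = (\<Sum>a\<in>A. gpg I1 f t a * gpg I2 f t (z - a))"
    unfolding gpg_def sum_product by (simp add: sum.cartesian_product split_def)
  finally show ?thesis .
qed

lemma finite_IM: "finite (IM M)"
proof -
  have "IM M \<subseteq> set_mset M \<times> {..<size M}"
  proof
    fix x assume "x \<in> IM M"
    then obtain v j where x: "x = (v, j)" "j < count M v" unfolding IM_def by auto
    hence "v \<in># M" by (intro count_inI) simp
    moreover have "j < size M" using x(2) count_le_size[of M v] by simp
    ultimately show "x \<in> set_mset M \<times> {..<size M}" using x by simp
  qed
  thus ?thesis by (rule finite_subset) auto
qed

lemma IM_fst: "x \<in> IM M \<Longrightarrow> fst x \<in># M"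
proof -
  assume "x \<in> IM M"
  then obtain v j where "x = (v, j)" "j < count M v" unfolding IM_def by auto
  thus ?thesis by (simp add: count_inI)
qed

lemma IM_plus: "IM (M1 + M2) = IM M1 \<union> (\<lambda>(v, j). (v, j + count M1 v)) ` IM M2"
proof (intro equalityI subsetI)
  fix x assume "x \<in> IM (M1 + M2)"
  then obtain v j where x: "x = (v, j)" "j < count M1 v + count M2 v" unfolding IM_def by auto
  show "x \<in> IM M1 \<union> (\<lambda>(v, j). (v, j + count M1 v)) ` IM M2"
  proof (cases "j < count M1 v")
    case True thus ?thesis using x unfolding IM_def by simp
  next
    case False
    hence "(v, j - count M1 v) \<in> IM M2" using x unfolding IM_def by simp
    moreover have "x = (\<lambda>(v, j). (v, j + count M1 v)) (v, j - count M1 v)" using x False by simp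
    ultimately show ?thesis by blast
  qed
next
  fix x assume "x \<in> IM M1 \<union> (\<lambda>(v, j). (v, j + count M1 v)) ` IM M2"
  thus "x \<in> IM (M1 + M2)" unfolding IM_def by auto
qed

lemma IM_plus_disj: "IM M1 \<inter> (\<lambda>(v, j). (v, j + count M1 v)) ` IM M2 = {}"
  unfolding IM_def by auto

lemma IM_shift_bij: "bij_betw (\<lambda>(v, j). (v, j + count M1 v)) (IM M2) ((\<lambda>(v, j). (v, j + count M1 v)) ` IM M2)"
  by (rule inj_on_imp_bij_betw) (auto simp: inj_on_def)

lemma gpg_plus:
  fixes M1 M2 :: "('n \<Rightarrow> int) multiset"
  assumes fA: "finite A"
    and A: "\<And>a. CCg (IM M1) fst a \<noteq> {} \<Longrightarrow> CCg (IM M2) fst (z - a) \<noteq> {} \<Longrightarrow> a \<in> A"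
    and fin1: "\<And>a. finite (CCg (IM M1) fst a)" and fin2: "\<And>a. finite (CCg (IM M2) fst a)"
  shows "gpg (IM (M1 + M2)) fst t z = (\<Sum>a\<in>A. gpg (IM M1) fst t a * gpg (IM M2) fst t (z - a))"
proof -
  define sh where "sh = (\<lambda>(v::'n \<Rightarrow> int, j). (v, j + count M1 v))"
  have bij: "bij_betw sh (IM M2) (sh ` IM M2)" unfolding sh_def by (rule IM_shift_bij)
  have fs: "(\<lambda>y. fst (sh y)) = fst" unfolding sh_def by auto
  have re1: "gpg (sh ` IM M2) fst t b = gpg (IM M2) fst t b" for b
    using gpg_reindex(1)[OF bij, where f = fst and t = t and z = b] unfolding fs .
  have re2: "finite (CCg (sh ` IM M2) fst b) = finite (CCg (IM M2) fst b)" for b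
    using gpg_reindex(2)[OF bij, where f = fst and z = b] unfolding fs .
  have re3: "(CCg (sh ` IM M2) fst b = {}) = (CCg (IM M2) fst b = {})" for b
    using gpg_reindex(3)[OF bij, where f = fst and z = b] unfolding fs .
  have "gpg (IM M1 \<union> sh ` IM M2) fst t z = (\<Sum>a\<in>A. gpg (IM M1) fst t a * gpg (sh ` IM M2) fst t (z - a))"
  proof (rule gpg_union)
    show "finite (IM M1)" by (rule finite_IM)
    show "finite (sh ` IM M2)" by (rule finite_imageI[OF finite_IM])
    show "IM M1 \<inter> sh ` IM M2 = {}" unfolding sh_def by (rule IM_plus_disj)
    show "finite A" by fact
    fix a
    show "CCg (IM M1) fst a \<noteq> {} \<Longrightarrow> CCg (sh ` IM M2) fst (z - a) \<noteq> {} \<Longrightarrow> a \<in> A"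
      using A re3[of "z - a"] by simp
    show "finite (CCg (IM M1) fst a)" by (rule fin1)
    show "finite (CCg (sh ` IM M2) fst a)" using fin2[of a] re2[of a] by simp
  qed
  thus ?thesis unfolding IM_plus sh_def[symmetric] re1 .
qed

lemma zzz: True by simp


lemma count_neg: "count (image_mset uminus M) (- v) = count M (v :: 'n \<Rightarrow> int)"
proof -
  have "uminus -` {- v} \<inter> set_mset M = (if v \<in># M then {v} else {})" by auto
  thus ?thesis by (auto simp: count_image_mset not_in_iff)
qed

lemma gpg_negM: fixes M :: "('n \<Rightarrow> int) multiset" shows "gpg (IM (image_mset uminus M)) fst t (- y) = gpg (IM M) fst t y"
proof -
  define h where "h = (\<lambda>(v::'n \<Rightarrow> int, j::nat). (- v, j))"
  have bij: "bij_betw h (IM M) (IM (image_mset uminus M))"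
  proof (rule bij_betw_byWitness[where f' = h])
    show "\<forall>a\<in>IM M. h (h a) = a" unfolding h_def by auto
    show "\<forall>a\<in>IM (image_mset uminus M). h (h a) = a" unfolding h_def by auto
    show "h ` IM M \<subseteq> IM (image_mset uminus M)"
    proof
      fix x assume "x \<in> h ` IM M"
      then obtain v j where "x = (- v, j)" "j < count M v" unfolding h_def IM_def by auto
      thus "x \<in> IM (image_mset uminus M)" using count_neg[of M v] unfolding IM_def by simp
    qed
    show "h ` IM (image_mset uminus M) \<subseteq> IM M"
    proof
      fix x assume "x \<in> h ` IM (image_mset uminus M)"
      then obtain v j where "x = (- v, j)" "j < count (image_mset uminus M) v" unfolding h_def IM_def by auto
      thus "x \<in> IM M" using count_neg[of M "- v"] unfolding IM_def by simp
    qed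
  qed
  have fs: "(\<lambda>x. fst (h x)) = (\<lambda>x. - fst x)" unfolding h_def by auto
  have "gpg (IM (image_mset uminus M)) fst t (- y) = gpg (IM M) (\<lambda>x. - fst x) t (- y)"
    using gpg_reindex(1)[OF bij, where f = fst and t = t and z = "- y"] unfolding fs .
  also have "\<dots> = gpg (IM M) fst t y" by (simp add: gpg_neg)
  finally show ?thesis .
qed

lemma fconv_eq:
  assumes "finite A" "{a. f a \<noteq> 0 \<and> g (\<mu> - a) \<noteq> 0} \<subseteq> A"
  shows "fconv f g \<mu> = (\<Sum>a\<in>A. f a * g (\<mu> - a))"
proof -
  have e: "(\<lambda>i. \<mu> i - a i) = \<mu> - a" for a by (simp add: fun_eq_iff)
  show ?thesis unfolding fconv_def e
    by (rule sum.mono_neutral_left) (use assms in auto)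
qed

context RD begin

lemma vsum_pair_P: "c \<in> CCg (IM (mset_set PP)) fst z \<Longrightarrow> pair \<phi> z = (\<Sum>x\<in>IM (mset_set PP). int (c x) * pair \<phi> (fst x))"
  unfolding CCg_def by (auto simp: pair_vsum)

lemma IM_P: "x \<in> IM (mset_set PP) \<Longrightarrow> fst x \<in> PP"
  using IM_fst finPP by fastforce

lemma CC_P_fin: "finite (CCg (IM (mset_set PP)) fst z)"
  by (rule CCg_finite[OF finite_IM, of _ rr]) (use IM_P PP_pos in \<open>auto simp: int_one_le_iff_zero_less\<close>)

lemma W_det: assumes hdet: "\<forall>a\<in>R. pair det (cor a) = 0"
  shows "w \<in> W \<Longrightarrow> pair det (w l) = pair det l"
proof (induction arbitrary: l rule: weyl_group.induct)
  case weyl_id thus ?case by simp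
next
  case (weyl_step w a)
  have "pair det ((sr a \<circ> w) l) = pair det (w l) - pair a (w l) * pair det (cor a)"
    unfolding comp_apply corefl_eq pair_diff2 pair_sm2 ..
  thus ?case using hdet weyl_step by simp
qed

lemma det_PP: "\<forall>a\<in>R. pair det (cor a) = 0 \<Longrightarrow> S \<subseteq> PP \<Longrightarrow> pair det (\<Sum>g\<in>S. g) = 0"
  using RpR by (auto simp: pair_sum2 intro!: sum.neutral)

lemma det_CC_P: "\<forall>a\<in>R. pair det (cor a) = 0 \<Longrightarrow> CCg (IM (mset_set PP)) fst z \<noteq> {} \<Longrightarrow> pair det z = 0"
proof -
  assume h: "\<forall>a\<in>R. pair det (cor a) = 0" and "CCg (IM (mset_set PP)) fst z \<noteq> {}"
  then obtain c where c: "c \<in> CCg (IM (mset_set PP)) fst z" by auto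
  have "pair det z = (\<Sum>x\<in>IM (mset_set PP). int (c x) * pair det (fst x))" by (rule vsum_pair_P[OF c])
  also have "\<dots> = 0"
  proof (rule sum.neutral, rule ballI)
    fix x assume "x \<in> IM (mset_set PP)"
    then obtain b where "b \<in> Rp" "fst x = cor b" using IM_P by blast
    hence "pair det (fst x) = 0" using h RpR by auto
    thus "int (c x) * pair det (fst x) = 0" by simp
  qed
  finally show ?thesis .
qed

lemma det_rhodiff: "\<forall>a\<in>R. pair det (cor a) = 0 \<Longrightarrow> w \<in> W \<Longrightarrow> pair det (rhodiff Rp cor w) = 0"
  using W_rhodiff det_PP by metis

lemma weights_V_mem: "v \<in># weights_V R cor Rp rho \<Longrightarrow> weight_mult R cor Rp rho v \<noteq> 0"
proof -
  assume v: "v \<in># weights_V R cor Rp rho"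
  define S where "S = {mu. weight_mult R cor Rp rho mu \<noteq> 0}"
  have fS: "finite S"
  proof (rule ccontr)
    assume "infinite S"
    hence "weights_V R cor Rp rho = {#}" unfolding weights_V_def S_def[symmetric] by simp
    thus False using v by simp
  qed
  have "v \<in> set_mset (\<Sum>mu\<in>S. replicate_mset (nat (weight_mult R cor Rp rho mu)) mu)"
    using v unfolding weights_V_def S_def by simp
  also have "\<dots> = (\<Union>mu\<in>S. set_mset (replicate_mset (nat (weight_mult R cor Rp rho mu)) mu))"
    by (rule set_mset_sum[OF fS])
  finally obtain mu where mu: "mu \<in> S" "v \<in># replicate_mset (nat (weight_mult R cor Rp rho mu)) mu"
    by blast
  hence "v = mu" by (simp split: if_splits)
  hence "v \<in> S" using mu by simp
  thus ?thesis unfolding S_def by simp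
qed

lemma det_V: assumes hdet: "\<forall>a\<in>R. pair det (cor a) = 0" and hrho: "pair det rho = 1"
  and v: "v \<in># weights_V R cor Rp rho" shows "pair det v = 1"
proof -
  have "weight_mult R cor Rp rho v \<noteq> 0" by (rule weights_V_mem[OF v])
  then obtain w where w: "w \<in> W"
    "poly (geom_poly (mset_set PP) (\<lambda>i. v i - w rho i - rhodiff Rp cor w i)) 1 \<noteq> 0"
    unfolding weight_mult_def by (metis (no_types, lifting) mult_eq_0_iff sum.neutral)
  define z where "z = v - w rho - rhodiff Rp cor w"
  have "(\<lambda>i. v i - w rho i - rhodiff Rp cor w i) = z" unfolding z_def by (simp add: fun_eq_iff)
  hence "geom_poly (mset_set PP) z \<noteq> 0" using w(2) by auto
  hence "CCg (IM (mset_set PP)) fst z \<noteq> {}" by (rule geom_nz)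
  hence "pair det z = 0" by (rule det_CC_P[OF hdet])
  moreover have "pair det (w rho) = 1" using W_det[OF hdet w(1)] hrho by simp
  moreover have "pair det (rhodiff Rp cor w) = 0" by (rule det_rhodiff[OF hdet w(1)])
  ultimately show ?thesis unfolding z_def by (simp add: pair_diff2)
qed

end


context RD begin

context
  fixes det rho :: "'n \<Rightarrow> int" and q :: real
  assumes hdet: "\<forall>a\<in>R. pair det (cor a) = 0" and hrho: "pair det rho = 1" and hq: "q > 1"
begin

abbreviation "VV \<equiv> weights_V R cor Rp rho"
abbreviation "PM \<equiv> mset_set PP"

definition AA :: "int \<Rightarrow> ('n \<Rightarrow> int) set" where
  "AA k = (\<lambda>c. vsum (IM VV) c fst) ` (IM VV \<rightarrow>\<^sub>E {0..nat k})"

lemma finAA: "finite (AA k)"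
  unfolding AA_def by (intro finite_imageI finite_PiE finite_IM) auto

lemma IM_V: "x \<in> IM VV \<Longrightarrow> pair det (fst x) = 1"
  using IM_fst det_V[OF hdet hrho] by blast

lemma CC_V_fin: "finite (CCg (IM VV) fst a)"
  by (rule CCg_finite[OF finite_IM, of _ det]) (use IM_V in auto)

lemma det_CC_V: "c \<in> CCg (IM VV) fst a \<Longrightarrow> pair det a = int (\<Sum>x\<in>IM VV. c x)"
proof -
  assume c: "c \<in> CCg (IM VV) fst a"
  have "pair det a = (\<Sum>x\<in>IM VV. int (c x) * pair det (fst x))" using c unfolding CCg_def
    by (auto simp: pair_vsum)
  also have "\<dots> = (\<Sum>x\<in>IM VV. int (c x))" using IM_V by (intro sum.cong) auto
  finally show ?thesis by (simp add: of_nat_sum)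
qed

lemma in_AA:
  assumes c1: "CCg (IM VV) fst a \<noteq> {}" and c2: "CCg (IM PM) fst (z - a) \<noteq> {}"
  shows "a \<in> AA (pair det z)"
proof -
  obtain c where c: "c \<in> CCg (IM VV) fst a" using c1 by auto
  have "pair det (z - a) = 0" by (rule det_CC_P[OF hdet c2])
  hence da: "pair det a = pair det z" by (simp add: pair_diff2)
  have s: "pair det z = int (\<Sum>x\<in>IM VV. c x)" using det_CC_V[OF c] da by simp
  have s': "nat (pair det z) = (\<Sum>x\<in>IM VV. c x)" by (simp only: s nat_int)
  have "c x \<le> nat (pair det z)" if "x \<in> IM VV" for x
    unfolding s' using member_le_sum[OF that _ finite_IM, of c] by simp
  hence "c \<in> IM VV \<rightarrow>\<^sub>E {0..nat (pair det z)}" using c unfolding CCg_def by (auto simp: PiE_iff)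
  moreover have "a = vsum (IM VV) c fst" using c unfolding CCg_def by simp
  ultimately show ?thesis unfolding AA_def by blast
qed

lemma gV: "gpg (IM VV) fst t a = t ^ nat (pair det a) * gpg (IM VV) fst 1 a"
proof -
  have "gpg (IM VV) fst t a = (\<Sum>c\<in>CCg (IM VV) fst a. t ^ nat (pair det a))"
    unfolding gpg_def
  proof (rule sum.cong)
    fix c assume c: "c \<in> CCg (IM VV) fst a"
    have "nat (pair det a) = (\<Sum>x\<in>IM VV. c x)" by (simp only: det_CC_V[OF c] nat_int)
    thus "t ^ (\<Sum>x\<in>IM VV. c x) = t ^ nat (pair det a)" by simp
  qed simp
  thus ?thesis unfolding gpg_def by simp
qed

lemma KEY:
  "(if 0 \<le> pair det y then gpg (IM (image_mset uminus (PM + VV))) fst (1/q) (- y) * q powi pair det y else 0)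
   = (\<Sum>a\<in>AA (pair det y). gpg (IM VV) fst 1 a * gpg (IM PM) fst (1/q) (y - a))"
proof -
  define k where "k = pair det y"
  define t where "t = 1 / q"
  have "gpg (IM (image_mset uminus (PM + VV))) fst t (- y) = gpg (IM (VV + PM)) fst t y"
    using gpg_negM[of "PM + VV" t y] by (simp add: add.commute)
  also have "\<dots> = (\<Sum>a\<in>AA k. gpg (IM VV) fst t a * gpg (IM PM) fst t (y - a))"
  proof (rule gpg_plus)
    show "finite (AA k)" by (rule finAA)
    show "\<And>a. CCg (IM VV) fst a \<noteq> {} \<Longrightarrow> CCg (IM PM) fst (y - a) \<noteq> {} \<Longrightarrow> a \<in> AA k"
      unfolding k_def by (rule in_AA)
    show "\<And>a. finite (CCg (IM VV) fst a)" by (rule CC_V_fin)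
    show "\<And>a. finite (CCg (IM PM) fst a)" by (rule CC_P_fin)
  qed
  also have "\<dots> = (\<Sum>a\<in>AA k. t ^ nat k * (gpg (IM VV) fst 1 a * gpg (IM PM) fst t (y - a)))"
  proof (rule sum.cong)
    fix a assume "a \<in> AA k"
    show "gpg (IM VV) fst t a * gpg (IM PM) fst t (y - a) = t ^ nat k * (gpg (IM VV) fst 1 a * gpg (IM PM) fst t (y - a))"
    proof (cases "gpg (IM PM) fst t (y - a) = 0")
      case True thus ?thesis by simp
    next
      case False
      hence "CCg (IM PM) fst (y - a) \<noteq> {}" by (rule gpg_nz)
      hence "pair det (y - a) = 0" by (rule det_CC_P[OF hdet])
      hence "pair det a = k" unfolding k_def by (simp add: pair_diff2)
      thus ?thesis using gV[of t a] by simp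
    qed
  qed simp
  also have "\<dots> = t ^ nat k * (\<Sum>a\<in>AA k. gpg (IM VV) fst 1 a * gpg (IM PM) fst t (y - a))"
    by (simp add: sum_distrib_left)
  finally have e: "gpg (IM (image_mset uminus (PM + VV))) fst t (- y) =
      t ^ nat k * (\<Sum>a\<in>AA k. gpg (IM VV) fst 1 a * gpg (IM PM) fst t (y - a))" .
  show ?thesis
  proof (cases "0 \<le> k")
    case True
    have "t ^ nat k * q powi k = 1"
    proof -
      have "q powi k = q ^ nat k" using True by (metis int_nat_eq power_int_of_nat)
      thus ?thesis unfolding t_def using hq by (simp add: power_one_over)
    qed
    thus ?thesis using e True unfolding k_def[symmetric] t_def[symmetric] by simp
  next
    case False
    have "gpg (IM VV) fst 1 a * gpg (IM PM) fst t (y - a) = 0" if a: "a \<in> AA k" for a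
    proof (rule ccontr)
      assume "gpg (IM VV) fst 1 a * gpg (IM PM) fst t (y - a) \<noteq> 0"
      hence n1: "CCg (IM VV) fst a \<noteq> {}" and n2: "CCg (IM PM) fst (y - a) \<noteq> {}"
        using gpg_nz by auto
      obtain c where c: "c \<in> CCg (IM VV) fst a" using n1 by auto
      have "pair det (y - a) = 0" by (rule det_CC_P[OF hdet n2])
      hence "pair det a = k" unfolding k_def by (simp add: pair_diff2)
      moreover have "(\<Sum>x\<in>IM VV. int (c x)) \<ge> 0" by (rule sum_nonneg) simp
      ultimately show False using det_CC_V[OF c] False by (simp add: of_nat_sum)
    qed
    hence "(\<Sum>a\<in>AA k. gpg (IM VV) fst 1 a * gpg (IM PM) fst t (y - a)) = 0"
      by (intro sum.neutral) blast
    thus ?thesis using False unfolding k_def[symmetric] t_def[symmetric] by simp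
  qed
qed

lemma INNER:
  "fconv (\<lambda>m. \<Sum>S\<in>{S. S \<subseteq> cor ` Rp \<and> (\<lambda>i. \<Sum>g\<in>S. g i) = m}. (-1::real) ^ card S)
     (\<lambda>m. poly (map_poly of_int (geom_poly (mset_set (cor ` Rp)) m)) (1 / q)) x
   = (\<Sum>w\<in>W. (-1) ^ wlength Rp cor w * gpg (IM PM) fst (1/q) (x - rhodiff Rp cor w))"
proof -
  define Df where "Df = (\<lambda>m. \<Sum>S\<in>{S. S \<subseteq> cor ` Rp \<and> (\<lambda>i. \<Sum>g\<in>S. g i) = m}. (-1::real) ^ card S)"
  define Gf where "Gf = (\<lambda>m. poly (map_poly of_int (geom_poly (mset_set (cor ` Rp)) m)) (1 / q))"
  define A where "A = (\<lambda>S. \<Sum>g\<in>S. g) ` Pow PP"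
  have fA: "finite A" unfolding A_def using finPP by simp
  have se: "(\<lambda>i. \<Sum>g\<in>S. g i) = (\<Sum>g\<in>S. g)" for S :: "('n \<Rightarrow> int) set"
    by (simp add: fun_eq_iff sum_fun_apply)
  have Dm: "Df m = (\<Sum>w\<in>W. (-1::real) ^ wlength Rp cor w * (if rhodiff Rp cor w = m then 1 else 0))" for m
  proof -
    have "Df m = real_of_int (\<Sum>S\<in>{S. S \<subseteq> PP \<and> (\<Sum>g\<in>S. g) = m}. (-1) ^ card S)"
      unfolding Df_def se by simp
    also have "\<dots> = real_of_int (\<Sum>w\<in>W. (-1::int) ^ wlength Rp cor w * (if rhodiff Rp cor w = m then 1 else 0))"
      using denominator[of m] by simp
    also have "\<dots> = (\<Sum>w\<in>W. (-1::real) ^ wlength Rp cor w * (if rhodiff Rp cor w = m then 1 else 0))"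
      by (auto simp: of_int_sum intro!: sum.cong)
    finally show ?thesis .
  qed
  have supp: "{a. Df a \<noteq> 0 \<and> Gf (x - a) \<noteq> 0} \<subseteq> A"
  proof
    fix m assume "m \<in> {a. Df a \<noteq> 0 \<and> Gf (x - a) \<noteq> 0}"
    hence "Df m \<noteq> 0" by simp
    hence "{S. S \<subseteq> PP \<and> (\<lambda>i. \<Sum>g\<in>S. g i) = m} \<noteq> {}" unfolding Df_def by (metis sum.empty)
    then obtain S where "S \<subseteq> PP" "(\<Sum>g\<in>S. g) = m" unfolding se by auto
    thus "m \<in> A" unfolding A_def by blast
  qed
  have rdA: "rhodiff Rp cor w \<in> A" if "w \<in> W" for w
    using W_rhodiff[OF that] unfolding A_def by blast
  have "fconv Df Gf x = (\<Sum>m\<in>A. Df m * Gf (x - m))" by (rule fconv_eq[OF fA supp])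
  also have "\<dots> = (\<Sum>m\<in>A. \<Sum>w\<in>W. (-1::real) ^ wlength Rp cor w * (if rhodiff Rp cor w = m then Gf (x - m) else 0))"
    unfolding Dm sum_distrib_right by (intro sum.cong refl) simp
  also have "\<dots> = (\<Sum>w\<in>W. \<Sum>m\<in>A. (-1::real) ^ wlength Rp cor w * (if rhodiff Rp cor w = m then Gf (x - m) else 0))"
    by (rule sum.swap)
  also have "\<dots> = (\<Sum>w\<in>W. (-1::real) ^ wlength Rp cor w * Gf (x - rhodiff Rp cor w))"
  proof (rule sum.cong)
    fix w assume w: "w \<in> W"
    have "(\<Sum>m\<in>A. (-1::real) ^ wlength Rp cor w * (if rhodiff Rp cor w = m then Gf (x - m) else 0))
        = (-1::real) ^ wlength Rp cor w * (\<Sum>m\<in>A. if rhodiff Rp cor w = m then Gf (x - m) else 0)"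
      by (simp add: sum_distrib_left)
    also have "(\<Sum>m\<in>A. if rhodiff Rp cor w = m then Gf (x - m) else 0) = Gf (x - rhodiff Rp cor w)"
      using sum.delta'[OF fA, of "rhodiff Rp cor w" "\<lambda>m. Gf (x - m)"] rdA[OF w] by simp
    finally show "(\<Sum>m\<in>A. (-1::real) ^ wlength Rp cor w * (if rhodiff Rp cor w = m then Gf (x - m) else 0))
        = (-1::real) ^ wlength Rp cor w * Gf (x - rhodiff Rp cor w)" .
  qed simp
  finally show ?thesis unfolding Df_def Gf_def poly_geom by simp
qed

lemma FINAL: "(if 0 \<le> pair det \<mu> then c_coeff R cor Rp rho det q \<mu> else 0) = rhs_coeff R cor Rp rho q \<mu>"
proof -
  define k where "k = pair det \<mu>"
  define Lf where "Lf = (\<lambda>m. real_of_int (poly (geom_poly VV m) 1))"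
  define H where "H = (\<lambda>x. \<Sum>w\<in>W. (-1::real) ^ wlength Rp cor w * gpg (IM PM) fst (1/q) (x - rhodiff Rp cor w))"
  have Lf: "Lf a = gpg (IM VV) fst 1 a" for a unfolding Lf_def by (rule poly_geom1)
  have dy: "pair det (\<mu> - rhodiff Rp cor w) = k" if "w \<in> W" for w
    using det_rhodiff[OF hdet that] unfolding k_def by (simp add: pair_diff2)
  have r1: "rhs_coeff R cor Rp rho q \<mu> = fconv Lf H \<mu>"
    unfolding rhs_coeff_def Lf_def H_def INNER ..
  have supp: "{a. Lf a \<noteq> 0 \<and> H (\<mu> - a) \<noteq> 0} \<subseteq> AA k"
  proof
    fix a assume "a \<in> {a. Lf a \<noteq> 0 \<and> H (\<mu> - a) \<noteq> 0}"
    hence l: "Lf a \<noteq> 0" and h: "H (\<mu> - a) \<noteq> 0" by auto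
    have c1: "CCg (IM VV) fst a \<noteq> {}" using l Lf gpg_nz by metis
    obtain w where w: "w \<in> W" "gpg (IM PM) fst (1/q) (\<mu> - a - rhodiff Rp cor w) \<noteq> 0"
      using h unfolding H_def by (metis (no_types, lifting) mult_zero_right sum.neutral)
    have "\<mu> - a - rhodiff Rp cor w = (\<mu> - rhodiff Rp cor w) - a" by (simp add: algebra_simps)
    hence c2: "CCg (IM PM) fst ((\<mu> - rhodiff Rp cor w) - a) \<noteq> {}" using w(2) gpg_nz by metis
    show "a \<in> AA k" using in_AA[OF c1 c2] dy[OF w(1)] by simp
  qed
  have "fconv Lf H \<mu> = (\<Sum>a\<in>AA k. Lf a * H (\<mu> - a))" by (rule fconv_eq[OF finAA supp])
  also have "\<dots> = (\<Sum>a\<in>AA k. \<Sum>w\<in>W. (-1::real) ^ wlength Rp cor w *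
       (gpg (IM VV) fst 1 a * gpg (IM PM) fst (1/q) ((\<mu> - rhodiff Rp cor w) - a)))"
  proof (rule sum.cong)
    fix a assume "a \<in> AA k"
    have e: "\<mu> - a - rhodiff Rp cor w = (\<mu> - rhodiff Rp cor w) - a" for w by (simp add: algebra_simps)
    show "Lf a * H (\<mu> - a) = (\<Sum>w\<in>W. (-1::real) ^ wlength Rp cor w *
       (gpg (IM VV) fst 1 a * gpg (IM PM) fst (1/q) ((\<mu> - rhodiff Rp cor w) - a)))"
      unfolding H_def Lf e sum_distrib_left by (rule sum.cong) (simp_all add: algebra_simps)
  qed simp
  also have "\<dots> = (\<Sum>w\<in>W. (-1::real) ^ wlength Rp cor w *
       (\<Sum>a\<in>AA k. gpg (IM VV) fst 1 a * gpg (IM PM) fst (1/q) ((\<mu> - rhodiff Rp cor w) - a)))"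
    by (subst sum.swap) (simp add: sum_distrib_left)
  finally have R: "rhs_coeff R cor Rp rho q \<mu> = (\<Sum>w\<in>W. (-1::real) ^ wlength Rp cor w *
       (\<Sum>a\<in>AA k. gpg (IM VV) fst 1 a * gpg (IM PM) fst (1/q) ((\<mu> - rhodiff Rp cor w) - a)))"
    using r1 by simp
  have neg: "(\<lambda>v i. - v i) = (uminus :: ('n \<Rightarrow> int) \<Rightarrow> _)" by (simp add: fun_eq_iff)
  have arg: "(\<lambda>i. rhodiff Rp cor w i - \<mu> i) = - (\<mu> - rhodiff Rp cor w)" for w by (simp add: fun_eq_iff)
  have C: "c_coeff R cor Rp rho det q \<mu> = (\<Sum>w\<in>W. (-1::real) ^ wlength Rp cor w *
      (gpg (IM (image_mset uminus (PM + VV))) fst (1/q) (- (\<mu> - rhodiff Rp cor w)) * q powi k))"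
    unfolding c_coeff_def P_Psi_def Psi_def neg arg poly_geom k_def by (simp add: mult.assoc)
  have "(if 0 \<le> k then c_coeff R cor Rp rho det q \<mu> else 0) = (\<Sum>w\<in>W. (-1::real) ^ wlength Rp cor w *
      (if 0 \<le> k then gpg (IM (image_mset uminus (PM + VV))) fst (1/q) (- (\<mu> - rhodiff Rp cor w)) * q powi k else 0))"
    unfolding C by (cases "0 \<le> k") simp_all
  also have "\<dots> = (\<Sum>w\<in>W. (-1::real) ^ wlength Rp cor w *
       (\<Sum>a\<in>AA k. gpg (IM VV) fst 1 a * gpg (IM PM) fst (1/q) ((\<mu> - rhodiff Rp cor w) - a)))"
  proof (rule sum.cong)
    fix w assume w: "w \<in> W"
    show "(-1::real) ^ wlength Rp cor w *
      (if 0 \<le> k then gpg (IM (image_mset uminus (PM + VV))) fst (1/q) (- (\<mu> - rhodiff Rp cor w)) * q powi k else 0)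
      = (-1::real) ^ wlength Rp cor w *
       (\<Sum>a\<in>AA k. gpg (IM VV) fst 1 a * gpg (IM PM) fst (1/q) ((\<mu> - rhodiff Rp cor w) - a))"
      unfolding KEY[of "\<mu> - rhodiff Rp cor w", unfolded dy[OF w]] ..
  qed simp
  finally show ?thesis using R unfolding k_def by simp
qed

end
end

theorem mainTheorem11:
  fixes R :: "('n::finite \<Rightarrow> int) set"
    and cor :: "('n \<Rightarrow> int) \<Rightarrow> ('n \<Rightarrow> int)"
    and Rp :: "('n \<Rightarrow> int) set"
    and rho det :: "'n \<Rightarrow> int"
    and q :: real
  assumes "root_datum R cor"
    and "positive_system R Rp"
    and "\<forall>a\<in>Rp. pair a rho \<le> 0"
    and "\<not> (\<exists>c :: ('n \<Rightarrow> int) \<Rightarrow> real. \<forall>i. real_of_int (rho i) = (\<Sum>g\<in>cor ` R. c g * real_of_int (g i)))"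
    and "\<forall>a\<in>R. pair det (cor a) = 0"
    and "pair det rho = 1"
    and "\<forall>x. (\<forall>a\<in>R. pair x (cor a) = 0) \<longrightarrow> (\<exists>k::int. x = (\<lambda>i. k * det i))"
    and "q > 1"
  shows "\<forall>mu. (if pair det mu \<ge> 0 then c_coeff R cor Rp rho det q mu else 0)
               = rhs_coeff R cor Rp rho q mu"
proof -
  obtain xi where xi: "\<forall>a\<in>R. (\<Sum>i\<in>UNIV. real_of_int (a i) * xi i) \<noteq> 0"
      "Rp = {a\<in>R. (\<Sum>i\<in>UNIV. real_of_int (a i) * xi i) > 0}"
    using assms(2) unfolding positive_system_def by blast
  interpret RD R cor Rp xi using assms(1) xi unfolding RD_def xv_def by auto
  show ?thesis using FINAL[OF assms(5) assms(6) assms(8)] by blast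
qed

end
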